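(* Let $\mathcal{H}_A=\bigoplus_{k=1}^K\mathcal{H}_{k,1}\otimes\mathcal{H}_{k,2}$, let $\delta_k$ be positive definite states on $\mathcal{H}_{k,2}$, $d_k=\dim\mathcal{H}_{k,1}$, $d=\dim\mathcal{H}_A$, and let $\mathcal{P}(X)=\bigoplus_k\mathrm{Tr}_2(P_kXP_k)\otimes\delta_k$, where $P_k$ is the orthogonal projection onto $\mathcal{H}_{k,1}\otimes\mathcal{H}_{k,2}$ and $\mathrm{Tr}_2$ is the partial trace over $\mathcal{H}_{k,2}$. Then, with suprema over pure states $\psi_{RA}$ with $d_R=d$ and over classical-quantum states $\rho_{MA}=\sum_mp(m)|m\rangle\langle m|_M\otimes\rho^m_A$, and infima over states $\sigma_A$: \begin{align*} \sup_{\psi_{RA}}\inf_{\sigma_A}D_{\max}\big((\mathrm{id}\otimes\mathcal{P})(\psi_{RA})\,\|\,\mathbb 1_R\otimes\sigma_A\big)&\le\log\max_kd_k,\\ \sup_{\rho_{MA}}\inf_{\sigma_A}D_{\max}\big((\mathrm{id}\otimes\mathcal{P})(\rho_{MA})\,\|\,\rho_M\otimes\sigma_A\big)&\le\log\textstyle\sum_kd_k,\\ \sup_{\psi_{RA}}\inf_{\sigma_A}D_{\max}\big((\mathrm{id}\otimes\mathcal{P})(\psi_{RA})\,\|\,\psi_R\otimes\sigma_A\big)&\le\log\textstyle\sum_kd_k^2,\\ \sup_{\psi_{RA}}\inf_{\sigma_{RA}\in\mathrm{SEP}(R:A)}D_{\max}\big((\mathrm{id}\otimes\mathcal{P})(\psi_{RA})\,\|\,\sigma_{RA}\big)&\le\log\max_kd_k.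 \end{align*}
   Context: $D_{\max}(\rho\|\sigma)=\log\inf\{\lambda:\rho\le\lambda\sigma\}$ for positive semidefinite $\rho,\sigma$; $\psi_R,\rho_M$ denote reduced states; $\mathrm{SEP}(R:A)$ is the set of separable states on $\mathcal{H}_R\otimes\mathcal{H}_A$; logarithms base 2. *)

theory Defs
  imports "Jordan_Normal_Form.Matrix" "HOL-Library.Extended_Real" Complex_Main
begin

(* All Hilbert spaces are concrete coordinate spaces C^n; matrices are complex n x n
   matrices (Jordan_Normal_Form).  Tensor product C^m (x) C^n = C^(m*n), basis index
   (i,k) |-> i*n+k (Kronecker ordering). *)

definition qform :: "nat \<Rightarrow> complex mat \<Rightarrow> complex vec \<Rightarrow> complex" where
  "qform n A v = (\<Sum>i<n. \<Sum>j<n. cnj (v $ i) * A $$ (i, j) * v $ j)"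

definition psd :: "nat \<Rightarrow> complex mat \<Rightarrow> bool" where
  "psd n A \<longleftrightarrow> A \<in> carrier_mat n n \<and>
     (\<forall>v\<in>carrier_vec n. Im (qform n A v) = 0 \<and> Re (qform n A v) \<ge> 0)"

definition pd :: "nat \<Rightarrow> complex mat \<Rightarrow> bool" where
  "pd n A \<longleftrightarrow> psd n A \<and> (\<forall>v\<in>carrier_vec n. v \<noteq> 0\<^sub>v n \<longrightarrow> Re (qform n A v) > 0)"

definition tr :: "complex mat \<Rightarrow> complex" where
  "tr A = (\<Sum>i<dim_row A. A $$ (i, i))"

definition states :: "nat \<Rightarrow> complex mat set" where
  "states n = {A. psd n A \<and> tr A = 1}"

definition outer :: "nat \<Rightarrow> complex vec \<Rightarrow> complex mat" where
  "outer n v = mat n n (\<lambda>(i, j). v $ i * cnj (v $ j))"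

definition pure_states :: "nat \<Rightarrow> complex mat set" where
  "pure_states n = {outer n v | v. v \<in> carrier_vec n \<and> (\<Sum>i<n. (cmod (v $ i))\<^sup>2) = 1}"

definition kron :: "complex mat \<Rightarrow> complex mat \<Rightarrow> complex mat" where
  "kron A B = mat (dim_row A * dim_row B) (dim_col A * dim_col B)
     (\<lambda>(i, j). A $$ (i div dim_row B, j div dim_col B) * B $$ (i mod dim_row B, j mod dim_col B))"

definition ptrace2 :: "nat \<Rightarrow> nat \<Rightarrow> complex mat \<Rightarrow> complex mat" where
  "ptrace2 m n X = mat m m (\<lambda>(i, j). \<Sum>k<n. X $$ (i * n + k, j * n + k))"

definition id_tensor :: "nat \<Rightarrow> nat \<Rightarrow> (complex mat \<Rightarrow> complex mat) \<Rightarrow> complex mat \<Rightarrow> complex mat" where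
  "id_tensor m n Phi X = mat (m * n) (m * n)
     (\<lambda>(i, j). Phi (mat n n (\<lambda>(x, y). X $$ ((i div n) * n + x, (j div n) * n + y))) $$ (i mod n, j mod n))"

definition Dmax :: "complex mat \<Rightarrow> complex mat \<Rightarrow> ereal" where
  "Dmax \<rho> \<sigma> =
    (let n = dim_row \<rho>;
         S = {t::real. t \<ge> 0 \<and> psd n (mat n n (\<lambda>(i, j). of_real t * \<sigma> $$ (i, j) - \<rho> $$ (i, j)))}
     in if S = {} then \<infinity> else if Inf S = 0 then -\<infinity> else ereal (log 2 (Inf S)))"

definition ketbra :: "nat \<Rightarrow> nat \<Rightarrow> complex mat" where
  "ketbra n m = mat n n (\<lambda>(i, j). if i = m \<and> j = m then 1 else 0)"

(* classical-quantum states sum_m p(m) |m><m|_M (x) rho^m_A, with |M| = nM arbitrary;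
   pairs (nM, rho_MA) *)
definition cq_states :: "nat \<Rightarrow> (nat \<times> complex mat) set" where
  "cq_states d = {(nM, X) | nM X. \<exists>(p :: nat \<Rightarrow> real) rs.
      (\<forall>m<nM. p m \<ge> 0 \<and> rs m \<in> states d) \<and> (\<Sum>m<nM. p m) = 1 \<and>
      X = mat (nM * d) (nM * d) (\<lambda>(i, j). \<Sum>m<nM. of_real (p m) * kron (ketbra nM m) (rs m) $$ (i, j))}"

definition sep_states :: "nat \<Rightarrow> nat \<Rightarrow> complex mat set" where
  "sep_states dR dA = {X. \<exists>(N :: nat) (c :: nat \<Rightarrow> real) rs ss.
      (\<forall>i<N. c i \<ge> 0 \<and> rs i \<in> states dR \<and> ss i \<in> states dA) \<and> (\<Sum>i<N. c i) = 1 \<and>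
      X = mat (dR * dA) (dR * dA) (\<lambda>(x, y). \<Sum>i<N. of_real (c i) * kron (rs i) (ss i) $$ (x, y))}"

(* H_A = (+)_{k<K} C^(a k) (x) C^(b k); block k occupies indices off k ..< off (Suc k) *)
definition off :: "(nat \<Rightarrow> nat) \<Rightarrow> (nat \<Rightarrow> nat) \<Rightarrow> nat \<Rightarrow> nat" where
  "off a b k = (\<Sum>l<k. a l * b l)"

definition blockP :: "nat \<Rightarrow> (nat \<Rightarrow> nat) \<Rightarrow> (nat \<Rightarrow> nat) \<Rightarrow> (nat \<Rightarrow> complex mat) \<Rightarrow> complex mat \<Rightarrow> complex mat" where
  "blockP K a b \<delta> X = mat (off a b K) (off a b K) (\<lambda>(i, j).
     \<Sum>k<K. if off a b k \<le> i \<and> i < off a b (Suc k) \<and> off a b k \<le> j \<and> j < off a b (Suc k)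
       then kron (ptrace2 (a k) (b k)
                    (mat (a k * b k) (a k * b k) (\<lambda>(x, y). X $$ (off a b k + x, off a b k + y))))
                 (\<delta> k) $$ (i - off a b k, j - off a b k)
       else 0)"

end

theory Submission
  imports Defs
begin


definition ent :: "complex mat \<Rightarrow> nat \<Rightarrow> nat \<Rightarrow> complex" where "ent A i j = A $$ (i,j)"
definition sf :: "nat \<Rightarrow> (nat \<Rightarrow> nat \<Rightarrow> complex) \<Rightarrow> (nat \<Rightarrow> complex) \<Rightarrow> (nat \<Rightarrow> complex) \<Rightarrow> complex" where
  "sf n M u v = (\<Sum>i<n. \<Sum>j<n. cnj (u i) * M i j * v j)"
definition psdf :: "nat \<Rightarrow> (nat \<Rightarrow> nat \<Rightarrow> complex) \<Rightarrow> bool" where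
  "psdf n M \<longleftrightarrow> (\<forall>u. Im (sf n M u u) = 0 \<and> 0 \<le> Re (sf n M u u))"

lemma sf_cong: "(\<And>i. i<n \<Longrightarrow> u i = u' i) \<Longrightarrow> (\<And>i. i<n \<Longrightarrow> v i = v' i) \<Longrightarrow> sf n M u v = sf n M u' v'"
  unfolding sf_def by (intro sum.cong refl) auto

lemma sf_cong_M: "(\<And>i j. i<n \<Longrightarrow> j<n \<Longrightarrow> M i j = M' i j) \<Longrightarrow> sf n M u v = sf n M' u v"
  unfolding sf_def by (intro sum.cong refl) auto

lemma qform_sf: "qform n A v = sf n (ent A) (\<lambda>i. v $ i) (\<lambda>i. v $ i)"
  by (simp add: qform_def sf_def ent_def)

lemma psd_psdf: assumes "psd n A" shows "psdf n (ent A)"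
  unfolding psdf_def
proof
  fix u :: "nat \<Rightarrow> complex"
  have "vec n u \<in> carrier_vec n" by simp
  moreover have "qform n A (vec n u) = sf n (ent A) u u"
    unfolding qform_sf by (rule sf_cong) auto
  ultimately show "Im (sf n (ent A) u u) = 0 \<and> 0 \<le> Re (sf n (ent A) u u)"
    using assms unfolding psd_def by metis
qed

lemma psdI: assumes "A \<in> carrier_mat n n" "psdf n (ent A)" shows "psd n A"
  using assms unfolding psd_def psdf_def qform_sf by blast

lemma sf_sum_left: "finite J \<Longrightarrow> sf n M (\<lambda>i. \<Sum>j\<in>J. f j i) v = (\<Sum>j\<in>J. sf n M (f j) v)"
  unfolding sf_def by (simp add: sum_distrib_left sum_distrib_right sum.swap[of _ J])

lemma sf_sum_right: "finite J \<Longrightarrow> sf n M u (\<lambda>i. \<Sum>j\<in>J. f j i) = (\<Sum>j\<in>J. sf n M u (f j))"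
  unfolding sf_def by (simp add: sum_distrib_left sum_distrib_right sum.swap[of _ J])

lemma sf_scale_left: "sf n M (\<lambda>i. c * u i) v = cnj c * sf n M u v"
  unfolding sf_def by (simp add: sum_distrib_left mult_ac)

lemma sf_scale_right: "sf n M u (\<lambda>i. c * v i) = c * sf n M u v"
  unfolding sf_def by (simp add: sum_distrib_left mult_ac)

lemma sf_add_left: "sf n M (\<lambda>i. u i + u' i) v = sf n M u v + sf n M u' v"
  unfolding sf_def by (simp add: sum.distrib algebra_simps)

lemma sf_add_right: "sf n M u (\<lambda>i. v i + v' i) = sf n M u v + sf n M u v'"
  unfolding sf_def by (simp add: sum.distrib algebra_simps)

lemma sf_expand: "sf n M (\<lambda>k. u k + c * v k) (\<lambda>k. u k + c * v k)
   = sf n M u u + c * sf n M u v + cnj c * sf n M v u + cnj c * c * sf n M v v"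
  by (simp add: sf_add_left sf_add_right sf_scale_left sf_scale_right algebra_simps)

lemma if01[simp]: "(if P then (1::complex) else 0) * x = (if P then x else 0)"
  "x * (if P then (1::complex) else 0) = (if P then x else 0)" by auto

lemma sf_delta: assumes "i<n" "j<n"
  shows "sf n M (\<lambda>k. if k = i then 1 else 0) (\<lambda>k. if k = j then 1 else 0) = M i j"
  using assms unfolding sf_def by (simp add: if_distrib[of cnj] cong: if_cong)

lemma psdf_herm: assumes "psdf n M" "i<n" "j<n" shows "M j i = cnj (M i j)"
proof -
  let ?e = "\<lambda>i k. if k = i then (1::complex) else 0"
  have R: "Im (sf n M u u) = 0" for u using assms(1) unfolding psdf_def by blast
  have E: "sf n M (\<lambda>k. ?e i k + c * ?e j k) (\<lambda>k. ?e i k + c * ?e j k)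
     = M i i + c * M i j + cnj c * M j i + cnj c * c * M j j" for c
    by (simp only: sf_expand sf_delta[OF assms(2) assms(2)] sf_delta[OF assms(2) assms(3)]
      sf_delta[OF assms(3) assms(2)] sf_delta[OF assms(3) assms(3)])
  have ii: "Im (M i i) = 0" using R[of "?e i"] unfolding sf_delta[OF assms(2) assms(2)] .
  have jj: "Im (M j j) = 0" using R[of "?e j"] unfolding sf_delta[OF assms(3) assms(3)] .
  have "Im (M i i + 1 * M i j + cnj 1 * M j i + cnj 1 * 1 * M j j) = 0"
    using R[of "\<lambda>k. ?e i k + 1 * ?e j k"] unfolding E .
  hence 1: "Im (M i j) + Im (M j i) = 0" using ii jj by simp
  have "Im (M i i + \<i> * M i j + cnj \<i> * M j i + cnj \<i> * \<i> * M j j) = 0"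
    using R[of "\<lambda>k. ?e i k + \<i> * ?e j k"] unfolding E .
  hence 2: "Re (M i j) - Re (M j i) = 0" using ii jj by simp
  show ?thesis using 1 2 by (simp add: complex_eq_iff)
qed

lemma psdf_sf_swap: assumes "psdf n M" shows "sf n M v u = cnj (sf n M u v)"
proof -
  have "sf n M v u = (\<Sum>i<n. \<Sum>j<n. cnj (v i) * M i j * u j)" by (simp add: sf_def)
  also have "\<dots> = (\<Sum>j<n. \<Sum>i<n. cnj (cnj (u j) * M j i * v i))"
  proof (subst sum.swap, intro sum.cong refl)
    fix i j assume "i \<in> {..<n}" "j \<in> {..<n}"
    hence "M i j = cnj (M j i)" using psdf_herm[OF assms, of j i] by simp
    thus "cnj (v i) * M i j * u j = cnj (cnj (u j) * M j i * v i)" by (simp add: mult_ac)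
  qed
  also have "\<dots> = cnj (sf n M u v)" by (simp add: sf_def)
  finally show ?thesis .
qed


lemma psdf_real: "psdf n M \<Longrightarrow> sf n M u u = complex_of_real (Re (sf n M u u))"
  unfolding psdf_def by (simp add: complex_eq_iff)

lemma psdf_nonneg: "psdf n M \<Longrightarrow> 0 \<le> Re (sf n M u u)"
  unfolding psdf_def by blast

lemma sf_CS: assumes P: "psdf n M"
  shows "(cmod (sf n M u v))\<^sup>2 \<le> Re (sf n M u u) * Re (sf n M v v)"
proof -
  define A where "A = Re (sf n M u u)"
  define C where "C = Re (sf n M v v)"
  define B where "B = sf n M u v"
  have Ae: "sf n M u u = complex_of_real A" unfolding A_def by (rule psdf_real[OF P])
  have Ce: "sf n M v v = complex_of_real C" unfolding C_def by (rule psdf_real[OF P])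
  have sw: "sf n M v u = cnj B" unfolding B_def by (rule psdf_sf_swap[OF P])
  have A0: "0 \<le> A" "0 \<le> C" unfolding A_def C_def using psdf_nonneg[OF P] by auto
  have pos: "0 \<le> Re (complex_of_real A + c * B + cnj c * cnj B + cnj c * c * complex_of_real C)" for c
    using psdf_nonneg[OF P, of "\<lambda>k. u k + c * v k"] unfolding sf_expand Ae Ce sw B_def .
  have BB: "cnj B * B = complex_of_real ((cmod B)\<^sup>2)" by (metis complex_norm_square mult.commute of_real_power)
  show ?thesis
  proof (cases "C > 0")
    case True
    define c where "c = - cnj B / complex_of_real C"
    have eqC: "complex_of_real A + c * B + cnj c * cnj B + cnj c * c * complex_of_real C
       = complex_of_real (A - (cmod B)\<^sup>2 / C)"
    proof -
      have "cnj c = - B / complex_of_real C" unfolding c_def by simp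
      hence "complex_of_real A + c * B + cnj c * cnj B + cnj c * c * complex_of_real C
          = complex_of_real A - (cnj B * B) / complex_of_real C"
        unfolding c_def using True by (simp add: field_simps)
      also have "\<dots> = complex_of_real (A - (cmod B)\<^sup>2 / C)" unfolding BB by simp
      finally show ?thesis .
    qed
    have "0 \<le> A - (cmod B)\<^sup>2 / C" using pos[of c] unfolding eqC by simp
    hence "(cmod B)\<^sup>2 \<le> A * C" using True by (simp add: field_simps)
    thus ?thesis unfolding B_def A_def C_def .
  next
    case False
    hence C0: "C = 0" using A0 by simp
    have "B = 0"
    proof (rule ccontr)
      assume "B \<noteq> 0"
      hence nb: "(cmod B)\<^sup>2 > 0" by simp
      define t where "t = (A + 1) / (2 * (cmod B)\<^sup>2)"
      define c where "c = - complex_of_real t * cnj B"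
      have eq0: "complex_of_real A + c * B + cnj c * cnj B + cnj c * c * complex_of_real C
        = complex_of_real (A - 2 * t * (cmod B)\<^sup>2)"
        unfolding c_def C0 by (simp add: BB[symmetric] algebra_simps) (metis complex_norm_square of_real_power)
      have "0 \<le> A - 2 * t * (cmod B)\<^sup>2" using pos[of c] unfolding eq0 by simp
      moreover have "2 * t * (cmod B)\<^sup>2 = A + 1" unfolding t_def using nb by (simp add: field_simps)
      ultimately show False by simp
    qed
    thus ?thesis using A0 unfolding B_def A_def C_def by simp
  qed
qed

lemma sf_CS': assumes "psdf n M"
  shows "cmod (sf n M u v) \<le> sqrt (Re (sf n M u u)) * sqrt (Re (sf n M v v))"
proof -
  have "cmod (sf n M u v) = sqrt ((cmod (sf n M u v))\<^sup>2)" by simp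
  also have "\<dots> \<le> sqrt (Re (sf n M u u) * Re (sf n M v v))" by (rule real_sqrt_le_mono[OF sf_CS[OF assms]])
  also have "\<dots> = sqrt (Re (sf n M u u)) * sqrt (Re (sf n M v v))" by (simp add: real_sqrt_mult)
  finally show ?thesis .
qed

lemma real_CS: fixes a b :: "'a \<Rightarrow> real"
  shows "(\<Sum>i\<in>I. a i * b i)\<^sup>2 \<le> (\<Sum>i\<in>I. (a i)\<^sup>2) * (\<Sum>i\<in>I. (b i)\<^sup>2)"
proof -
  have "0 \<le> (\<Sum>i\<in>I. \<Sum>j\<in>I. (a i * b j - a j * b i)\<^sup>2)" by (intro sum_nonneg) auto
  also have "\<dots> = (\<Sum>i\<in>I. \<Sum>j\<in>I. (a i)\<^sup>2 * (b j)\<^sup>2) + (\<Sum>i\<in>I. \<Sum>j\<in>I. (a j)\<^sup>2 * (b i)\<^sup>2)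
      - 2 * (\<Sum>i\<in>I. \<Sum>j\<in>I. (a i * b i) * (a j * b j))"
    by (simp add: power2_eq_square algebra_simps sum.distrib sum_subtractf sum_distrib_left)
  also have "(\<Sum>i\<in>I. \<Sum>j\<in>I. (a i)\<^sup>2 * (b j)\<^sup>2) = (\<Sum>i\<in>I. (a i)\<^sup>2) * (\<Sum>i\<in>I. (b i)\<^sup>2)"
    by (simp add: sum_product)
  also have "(\<Sum>i\<in>I. \<Sum>j\<in>I. (a j)\<^sup>2 * (b i)\<^sup>2) = (\<Sum>i\<in>I. (a i)\<^sup>2) * (\<Sum>i\<in>I. (b i)\<^sup>2)"
    by (subst sum.swap) (simp add: sum_product mult.commute)
  also have "(\<Sum>i\<in>I. \<Sum>j\<in>I. (a i * b i) * (a j * b j)) = (\<Sum>i\<in>I. a i * b i)\<^sup>2"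
    by (simp add: sum_product power2_eq_square)
  finally show ?thesis by simp
qed


lemma sf_wCS: assumes P: "psdf n M" and J: "finite J"
  shows "Re (sf n M (\<lambda>i. \<Sum>j\<in>J. c j * f j i) (\<lambda>i. \<Sum>j\<in>J. c j * f j i))
    \<le> (\<Sum>j\<in>J. (cmod (c j))\<^sup>2) * (\<Sum>j\<in>J. Re (sf n M (f j) (f j)))"
proof -
  define A where "A j = Re (sf n M (f j) (f j))" for j
  have A0: "0 \<le> A j" for j unfolding A_def by (rule psdf_nonneg[OF P])
  have eq: "sf n M (\<lambda>i. \<Sum>j\<in>J. c j * f j i) (\<lambda>i. \<Sum>j\<in>J. c j * f j i)
      = (\<Sum>j\<in>J. \<Sum>j'\<in>J. cnj (c j) * c j' * sf n M (f j) (f j'))"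
    using J by (simp add: sf_sum_left sf_sum_right sf_scale_left sf_scale_right sum_distrib_left mult.assoc)
  have "Re (sf n M (\<lambda>i. \<Sum>j\<in>J. c j * f j i) (\<lambda>i. \<Sum>j\<in>J. c j * f j i))
      \<le> cmod (\<Sum>j\<in>J. \<Sum>j'\<in>J. cnj (c j) * c j' * sf n M (f j) (f j'))"
    unfolding eq by (rule complex_Re_le_cmod)
  also have "\<dots> \<le> (\<Sum>j\<in>J. \<Sum>j'\<in>J. cmod (cnj (c j) * c j' * sf n M (f j) (f j')))"
    by (rule order_trans[OF norm_sum], intro sum_mono norm_sum)
  also have "\<dots> \<le> (\<Sum>j\<in>J. \<Sum>j'\<in>J. (cmod (c j) * sqrt (A j)) * (cmod (c j') * sqrt (A j')))"
  proof (intro sum_mono)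
    fix j j'
    have "cmod (cnj (c j) * c j' * sf n M (f j) (f j')) = cmod (c j) * cmod (c j') * cmod (sf n M (f j) (f j'))"
      by (simp add: norm_mult)
    also have "\<dots> \<le> cmod (c j) * cmod (c j') * (sqrt (A j) * sqrt (A j'))"
      unfolding A_def by (intro mult_left_mono sf_CS'[OF P]) auto
    finally show "cmod (cnj (c j) * c j' * sf n M (f j) (f j')) \<le> (cmod (c j) * sqrt (A j)) * (cmod (c j') * sqrt (A j'))"
      by (simp add: mult_ac)
  qed
  also have "\<dots> = (\<Sum>j\<in>J. cmod (c j) * sqrt (A j))\<^sup>2"
    by (simp add: sum_product power2_eq_square)
  also have "\<dots> \<le> (\<Sum>j\<in>J. (cmod (c j))\<^sup>2) * (\<Sum>j\<in>J. (sqrt (A j))\<^sup>2)" by (rule real_CS)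
  also have "(\<Sum>j\<in>J. (sqrt (A j))\<^sup>2) = (\<Sum>j\<in>J. A j)" using A0 by simp
  finally show ?thesis unfolding A_def .
qed

lemma sf_sumCS: assumes P: "psdf n M" and J: "finite J"
  shows "Re (sf n M (\<lambda>i. \<Sum>j\<in>J. f j i) (\<lambda>i. \<Sum>j\<in>J. f j i))
    \<le> real (card J) * (\<Sum>j\<in>J. Re (sf n M (f j) (f j)))"
  using sf_wCS[OF P J, of "\<lambda>_. 1" f] by simp

lemma psdf_diag: assumes "psdf m T" "x < m" shows "0 \<le> Re (T x x)" "Im (T x x) = 0"
  using psdf_nonneg[OF assms(1), of "\<lambda>k. if k = x then 1 else 0"] sf_delta[OF assms(2) assms(2), of T]
    assms(1) unfolding psdf_def by metis+

lemma psdf_offdiag: assumes "psdf m T" "x < m" "y < m"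
  shows "cmod (T x y) \<le> sqrt (Re (T x x)) * sqrt (Re (T y y))"
  using sf_CS'[OF assms(1), of "\<lambda>k. if k = x then 1 else 0" "\<lambda>k. if k = y then 1 else 0"]
  unfolding sf_delta[OF assms(2) assms(3)] sf_delta[OF assms(2) assms(2)] sf_delta[OF assms(3) assms(3)] .

lemma tauG: assumes T: "psdf m T"
  and G: "\<And>x y. x<m \<Longrightarrow> y<m \<Longrightarrow> cmod (G x y) \<le> sqrt (Re (G x x)) * sqrt (Re (G y y))"
  and G0: "\<And>x. x<m \<Longrightarrow> 0 \<le> Re (G x x)"
  shows "Re (\<Sum>x<m. \<Sum>y<m. T x y * G x y) \<le> (\<Sum>x<m. Re (T x x)) * (\<Sum>x<m. Re (G x x))"
proof -
  define t where "t x = sqrt (Re (T x x)) * sqrt (Re (G x x))" for x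
  have "Re (\<Sum>x<m. \<Sum>y<m. T x y * G x y) \<le> cmod (\<Sum>x<m. \<Sum>y<m. T x y * G x y)"
    by (rule complex_Re_le_cmod)
  also have "\<dots> \<le> (\<Sum>x<m. \<Sum>y<m. cmod (T x y * G x y))"
    by (rule order_trans[OF norm_sum], intro sum_mono norm_sum)
  also have "\<dots> \<le> (\<Sum>x<m. \<Sum>y<m. t x * t y)"
  proof (intro sum_mono)
    fix x y assume "x \<in> {..<m}" "y \<in> {..<m}"
    hence xy: "x<m" "y<m" by auto
    have "cmod (T x y * G x y) = cmod (T x y) * cmod (G x y)" by (simp add: norm_mult)
    also have "\<dots> \<le> (sqrt (Re (T x x)) * sqrt (Re (T y y))) * (sqrt (Re (G x x)) * sqrt (Re (G y y)))"
      by (intro mult_mono psdf_offdiag[OF T xy] G[OF xy]) (use psdf_diag(1)[OF T] xy in auto)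
    finally show "cmod (T x y * G x y) \<le> t x * t y" unfolding t_def by (simp add: mult_ac)
  qed
  also have "\<dots> = (\<Sum>x<m. sqrt (Re (T x x)) * sqrt (Re (G x x)))\<^sup>2"
    by (simp add: sum_product power2_eq_square t_def)
  also have "\<dots> \<le> (\<Sum>x<m. (sqrt (Re (T x x)))\<^sup>2) * (\<Sum>x<m. (sqrt (Re (G x x)))\<^sup>2)" by (rule real_CS)
  also have "\<dots> = (\<Sum>x<m. Re (T x x)) * (\<Sum>x<m. Re (G x x))"
    using psdf_diag(1)[OF T] G0 by simp
  finally show ?thesis .
qed

lemma cnj_self_Im: "cnj z = z \<Longrightarrow> Im z = 0"
proof -
  assume "cnj z = z"
  hence "Im (cnj z) = Im z" by simp
  thus ?thesis by simp
qed

lemma herm_prod_real: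
  assumes "\<And>x y. x<m \<Longrightarrow> y<m \<Longrightarrow> T y x = cnj (T x y)"
    "\<And>x y. x<m \<Longrightarrow> y<m \<Longrightarrow> G y x = cnj (G x y)"
  shows "Im (\<Sum>x<m. \<Sum>y<m. T x y * G x y) = 0"
proof -
  have "cnj (\<Sum>x<m. \<Sum>y<m. T x y * G x y) = (\<Sum>x<m. \<Sum>y<m. cnj (T x y) * cnj (G x y))"
    by simp
  also have "\<dots> = (\<Sum>x<m. \<Sum>y<m. T y x * G y x)"
    by (intro sum.cong refl) (simp add: assms(1)[symmetric] assms(2)[symmetric])
  also have "\<dots> = (\<Sum>x<m. \<Sum>y<m. T x y * G x y)" by (rule sum.swap)
  finally have "cnj (\<Sum>x<m. \<Sum>y<m. T x y * G x y) = (\<Sum>x<m. \<Sum>y<m. T x y * G x y)" .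
  thus ?thesis by (rule cnj_self_Im)
qed




lemma sum_split_nat: "(\<Sum>i<(A::nat)+B. f i) = (\<Sum>i<A. f i) + (\<Sum>i<B. f (A+i))"
  by (induct B) (auto simp: add.assoc)

lemma sum_prod_idx: "(\<Sum>i<(A::nat)*B. f i) = (\<Sum>x<A. \<Sum>y<B. f (x*B + y))"
proof (induct A)
  case (Suc A)
  have "(\<Sum>i<Suc A*B. f i) = (\<Sum>i<A*B + B. f i)" by (simp add: add.commute)
  also have "\<dots> = (\<Sum>i<A*B. f i) + (\<Sum>y<B. f (A*B+y))" by (rule sum_split_nat)
  finally show ?case using Suc by simp
qed simp

lemma off_Suc: "off a b (Suc k) = off a b k + a k * b k"
  by (simp add: off_def)

lemma off_0[simp]: "off a b 0 = 0"
  by (simp add: off_def)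

lemma off_mono: "k \<le> k' \<Longrightarrow> off a b k \<le> off a b k'"
  unfolding off_def by (rule sum_mono2) auto

lemma mult_idx_lt: "x < (A::nat) \<Longrightarrow> l < B \<Longrightarrow> x * B + l < A * B"
proof -
  assume "x < A" "l < B"
  hence "x * B + l < x * B + B" by simp
  also have "\<dots> = Suc x * B" by simp
  also have "\<dots> \<le> A * B" using \<open>x < A\<close> by (intro mult_le_mono1) simp
  finally show ?thesis .
qed

lemma idx_lt: assumes "k < K" "x < a k" "l < b k"
  shows "off a b k + x * b k + l < off a b (Suc k)" "off a b k + x * b k + l < off a b K"
proof -
  show 1: "off a b k + x * b k + l < off a b (Suc k)"
    using mult_idx_lt[OF assms(2,3)] by (simp add: off_Suc)
  show "off a b k + x * b k + l < off a b K"
    using 1 off_mono[of "Suc k" K a b] assms(1) by simp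
qed

lemma blk_sum: "(\<Sum>i<off a b K. f i) = (\<Sum>k<K. \<Sum>i<a k * b k. f (off a b k + i))"
  by (induct K) (simp_all add: off_Suc sum_split_nat)

lemma full_sum: "(\<Sum>i<off a b K. f i) = (\<Sum>k<K. \<Sum>x<a k. \<Sum>l<b k. f (off a b k + x * b k + l))"
  unfolding blk_sum by (simp add: sum_prod_idx add.assoc)

lemma blk_ind: assumes "k < K"
  shows "(\<Sum>i<off a b K. if off a b k \<le> i \<and> i < off a b (Suc k) then h i else 0)
       = (\<Sum>i<a k * b k. h (off a b k + i))"
proof -
  have le: "off a b (Suc k) \<le> off a b K" using assms by (intro off_mono) simp
  have "(\<Sum>i<off a b K. if off a b k \<le> i \<and> i < off a b (Suc k) then h i else 0)
      = (\<Sum>i\<in>{..<off a b K} \<inter> {i. off a b k \<le> i \<and> i < off a b (Suc k)}. h i)"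
    by (simp add: sum.inter_restrict)
  also have "{..<off a b K} \<inter> {i. off a b k \<le> i \<and> i < off a b (Suc k)} = {0 + off a b k..<a k * b k + off a b k}"
    using le by (auto simp: off_Suc)
  also have "(\<Sum>i\<in>\<dots>. h i) = (\<Sum>i\<in>{0..<a k * b k}. h (i + off a b k))"
    by (rule sum.shift_bounds_nat_ivl)
  finally show ?thesis by (simp add: atLeast0LessThan add.commute)
qed

lemma blk_unique: assumes "k < K" "k' < K" "off a b k \<le> i" "i < off a b (Suc k)"
  shows "(off a b k' \<le> i \<and> i < off a b (Suc k')) \<longleftrightarrow> k' = k"
proof
  assume A: "off a b k' \<le> i \<and> i < off a b (Suc k')"
  show "k' = k"
  proof (rule ccontr)
    assume "k' \<noteq> k"
    hence "Suc k' \<le> k \<or> Suc k \<le> k'" by auto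
    thus False
    proof
      assume "Suc k' \<le> k" thus False using off_mono[of "Suc k'" k a b] A assms by simp
    next
      assume "Suc k \<le> k'" thus False using off_mono[of "Suc k" k' a b] A assms by simp
    qed
  qed
qed (use assms in auto)

lemma blk_pick: assumes "k < K" "off a b k \<le> i" "i < off a b (Suc k)"
  shows "(\<Sum>k'<K. if off a b k' \<le> i \<and> i < off a b (Suc k') then g k' else 0) = g k"
proof -
  have "(\<Sum>k'<K. if off a b k' \<le> i \<and> i < off a b (Suc k') then g k' else 0)
      = (\<Sum>k'<K. if k' = k then g k' else 0)"
    by (intro sum.cong refl) (use blk_unique[OF assms(1) _ assms(2,3)] in auto)
  also have "\<dots> = g k" using assms(1) by simp
  finally show ?thesis .
qed

lemma sum_swap3: "(\<Sum>i\<in>I. \<Sum>j\<in>J. \<Sum>k\<in>L. F k i j) = (\<Sum>k\<in>L. \<Sum>i\<in>I. \<Sum>j\<in>J. F k i j)"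
proof -
  have "(\<Sum>i\<in>I. \<Sum>j\<in>J. \<Sum>k\<in>L. F k i j) = (\<Sum>i\<in>I. \<Sum>k\<in>L. \<Sum>j\<in>J. F k i j)"
    by (intro sum.cong refl) (rule sum.swap)
  also have "\<dots> = (\<Sum>k\<in>L. \<Sum>i\<in>I. \<Sum>j\<in>J. F k i j)" by (rule sum.swap)
  finally show ?thesis .
qed

lemma sum_if_out: "(\<Sum>j\<in>J. if P then f j else 0) = (if P then (\<Sum>j\<in>J. f j) else 0)"
  by auto

lemma blk_double:
  "(\<Sum>i<off a b K. \<Sum>j<off a b K. cnj (u i) * (\<Sum>k<K. if off a b k \<le> i \<and> i < off a b (Suc k) \<and>
        off a b k \<le> j \<and> j < off a b (Suc k) then g k (i - off a b k) (j - off a b k) else 0) * v j)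
   = (\<Sum>k<K. \<Sum>i<a k * b k. \<Sum>j<a k * b k. cnj (u (off a b k + i)) * g k i j * v (off a b k + j))"
proof -
  let ?C = "\<lambda>k i. off a b k \<le> i \<and> i < off a b (Suc k)"
  have "(\<Sum>i<off a b K. \<Sum>j<off a b K. cnj (u i) * (\<Sum>k<K. if off a b k \<le> i \<and> i < off a b (Suc k) \<and> off a b k \<le> j \<and> j < off a b (Suc k) then g k (i - off a b k) (j - off a b k) else 0) * v j)
      = (\<Sum>i<off a b K. \<Sum>j<off a b K. \<Sum>k<K. if ?C k i then (if ?C k j then cnj (u i) * g k (i - off a b k) (j - off a b k) * v j else 0) else 0)"
    by (simp only: sum_distrib_left sum_distrib_right, intro sum.cong refl) auto
  also have "\<dots> = (\<Sum>k<K. \<Sum>i<off a b K. if ?C k i then (\<Sum>j<off a b K. if ?C k j then cnj (u i) * g k (i - off a b k) (j - off a b k) * v j else 0) else 0)"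
    by (simp only: sum_swap3 sum_if_out)
  also have "\<dots> = (\<Sum>k<K. \<Sum>i<a k * b k. \<Sum>j<a k * b k. cnj (u (off a b k + i)) * g k i j * v (off a b k + j))"
  proof (rule sum.cong[OF refl])
    fix k assume "k \<in> {..<K}"
    hence k: "k < K" by simp
    show "(\<Sum>i<off a b K. if ?C k i then (\<Sum>j<off a b K. if ?C k j then cnj (u i) * g k (i - off a b k) (j - off a b k) * v j else 0) else 0)
       = (\<Sum>i<a k * b k. \<Sum>j<a k * b k. cnj (u (off a b k + i)) * g k i j * v (off a b k + j))"
      unfolding blk_ind[OF k] by simp
  qed
  finally show ?thesis .
qed




definition Ub :: "(nat\<Rightarrow>nat) \<Rightarrow> (nat\<Rightarrow>nat) \<Rightarrow> (nat \<Rightarrow> complex) \<Rightarrow> nat \<Rightarrow> nat \<Rightarrow> nat \<Rightarrow> complex" where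
  "Ub a b u k x x2 = u (off a b k + x * b k + x2)"
definition ptrf :: "(nat\<Rightarrow>nat) \<Rightarrow> (nat\<Rightarrow>nat) \<Rightarrow> nat \<Rightarrow> (nat \<Rightarrow> nat \<Rightarrow> complex) \<Rightarrow> nat \<Rightarrow> nat \<Rightarrow> complex" where
  "ptrf a b k F x y = (\<Sum>l<b k. F (off a b k + x * b k + l) (off a b k + y * b k + l))"

lemma divmod_idx: assumes "x2 < (n::nat)" shows "(x * n + x2) div n = x" "(x * n + x2) mod n = x2"
  using assms by auto

lemma kron_idx: assumes "dim_row A = m" "dim_col A = m" "dim_row B = n" "dim_col B = n"
  "x<m" "y<m" "x2<n" "y2<n"
  shows "kron A B $$ (x*n+x2, y*n+y2) = A $$ (x,y) * B $$ (x2,y2)"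
  using assms mult_idx_lt[of x m x2 n] mult_idx_lt[of y m y2 n]
  unfolding kron_def by (simp add: divmod_idx)

lemma ptrace2_idx: "x<m \<Longrightarrow> y<m \<Longrightarrow> ptrace2 m n X $$ (x,y) = (\<Sum>l<n. X $$ (x*n+l, y*n+l))"
  by (simp add: ptrace2_def)

lemma sum_rearr4: "(\<Sum>x\<in>A. \<Sum>x2\<in>B. \<Sum>y\<in>A. \<Sum>y2\<in>B. cnj (u x x2) * (p x y * d x2 y2) * v y y2)
   = (\<Sum>x\<in>A. \<Sum>y\<in>A. p x y * (\<Sum>x2\<in>B. \<Sum>y2\<in>B. cnj (u x x2) * d x2 y2 * v y y2))"
proof -
  have "(\<Sum>x\<in>A. \<Sum>x2\<in>B. \<Sum>y\<in>A. \<Sum>y2\<in>B. cnj (u x x2) * (p x y * d x2 y2) * v y y2)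
      = (\<Sum>x\<in>A. \<Sum>y\<in>A. \<Sum>x2\<in>B. \<Sum>y2\<in>B. cnj (u x x2) * (p x y * d x2 y2) * v y y2)"
    by (intro sum.cong refl) (rule sum.swap)
  also have "\<dots> = (\<Sum>x\<in>A. \<Sum>y\<in>A. p x y * (\<Sum>x2\<in>B. \<Sum>y2\<in>B. cnj (u x x2) * d x2 y2 * v y y2))"
    by (simp add: sum_distrib_left mult_ac)
  finally show ?thesis .
qed

lemma P_sf: assumes \<delta>: "\<forall>k<K. \<delta> k \<in> carrier_mat (b k) (b k)"
  shows "sf (off a b K) (ent (blockP K a b \<delta> Z)) u v
    = (\<Sum>k<K. \<Sum>x<a k. \<Sum>y<a k. ptrf a b k (ent Z) x y * sf (b k) (ent (\<delta> k)) (Ub a b u k x) (Ub a b v k y))"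
proof -
  define Q where "Q k = kron (ptrace2 (a k) (b k)
                    (mat (a k * b k) (a k * b k) (\<lambda>(x, y). Z $$ (off a b k + x, off a b k + y)))) (\<delta> k)" for k
  have "sf (off a b K) (ent (blockP K a b \<delta> Z)) u v
    = (\<Sum>i<off a b K. \<Sum>j<off a b K. cnj (u i) * (\<Sum>k<K. if off a b k \<le> i \<and> i < off a b (Suc k) \<and>
        off a b k \<le> j \<and> j < off a b (Suc k) then Q k $$ (i - off a b k, j - off a b k) else 0) * v j)"
    unfolding sf_def ent_def blockP_def Q_def by (intro sum.cong refl) simp
  also have "\<dots> = (\<Sum>k<K. \<Sum>i<a k * b k. \<Sum>j<a k * b k. cnj (u (off a b k + i)) * Q k $$ (i, j) * v (off a b k + j))"
    by (rule blk_double[where g="\<lambda>k i j. Q k $$ (i, j)"])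
  also have "\<dots> = (\<Sum>k<K. \<Sum>x<a k. \<Sum>y<a k. ptrf a b k (ent Z) x y * sf (b k) (ent (\<delta> k)) (Ub a b u k x) (Ub a b v k y))"
  proof (rule sum.cong[OF refl])
    fix k assume "k \<in> {..<K}"
    hence k: "k < K" by simp
    have dk: "dim_row (\<delta> k) = b k" "dim_col (\<delta> k) = b k" using \<delta>[rule_format, OF k] by auto
    have Qe: "Q k $$ (x * b k + x2, y * b k + y2) = ptrf a b k (ent Z) x y * \<delta> k $$ (x2, y2)"
      if "x < a k" "y < a k" "x2 < b k" "y2 < b k" for x y x2 y2
    proof -
      have "Q k $$ (x * b k + x2, y * b k + y2) = ptrace2 (a k) (b k)
                    (mat (a k * b k) (a k * b k) (\<lambda>(x, y). Z $$ (off a b k + x, off a b k + y))) $$ (x,y) * \<delta> k $$ (x2, y2)"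
        unfolding Q_def by (rule kron_idx) (use that dk in \<open>auto simp: ptrace2_def\<close>)
      also have "ptrace2 (a k) (b k)
                    (mat (a k * b k) (a k * b k) (\<lambda>(x, y). Z $$ (off a b k + x, off a b k + y))) $$ (x,y)
           = ptrf a b k (ent Z) x y"
        using that mult_idx_lt[of x "a k" _ "b k"] mult_idx_lt[of y "a k" _ "b k"]
        by (simp add: ptrace2_idx ptrf_def ent_def add.assoc)
      finally show ?thesis .
    qed
    have "(\<Sum>i<a k * b k. \<Sum>j<a k * b k. cnj (u (off a b k + i)) * Q k $$ (i, j) * v (off a b k + j))
      = (\<Sum>x<a k. \<Sum>x2<b k. \<Sum>y<a k. \<Sum>y2<b k. cnj (Ub a b u k x x2) * (ptrf a b k (ent Z) x y * \<delta> k $$ (x2, y2)) * Ub a b v k y y2)"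
      unfolding sum_prod_idx by (intro sum.cong refl) (simp add: Qe Ub_def add.assoc)
    also have "\<dots> = (\<Sum>x<a k. \<Sum>y<a k. ptrf a b k (ent Z) x y * sf (b k) (ent (\<delta> k)) (Ub a b u k x) (Ub a b v k y))"
      unfolding sum_rearr4 sf_def ent_def ..
    finally show "(\<Sum>i<a k * b k. \<Sum>j<a k * b k. cnj (u (off a b k + i)) * Q k $$ (i, j) * v (off a b k + j))
      = (\<Sum>x<a k. \<Sum>y<a k. ptrf a b k (ent Z) x y * sf (b k) (ent (\<delta> k)) (Ub a b u k x) (Ub a b v k y))" .
  qed
  finally show ?thesis .
qed


lemma sum_swap_mid: "(\<Sum>r\<in>A. \<Sum>i\<in>B. \<Sum>s\<in>C. \<Sum>j\<in>D. F r i s j) = (\<Sum>r\<in>A. \<Sum>s\<in>C. \<Sum>i\<in>B. \<Sum>j\<in>D. F r i s j)"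
  by (intro sum.cong refl) (rule sum.swap)

lemma id_tensor_idx: assumes "r<n" "s<n" "i<d" "j<d"
  shows "id_tensor n d Phi X $$ (r*d+i, s*d+j) = Phi (mat d d (\<lambda>(x,y). X $$ (r*d+x, s*d+y))) $$ (i,j)"
proof -
  have 1: "r*d+i < n*d" "s*d+j < n*d" using assms mult_idx_lt by auto
  have 2: "(r*d+i) div d = r" "(r*d+i) mod d = i" "(s*d+j) div d = s" "(s*d+j) mod d = j"
    using assms(3,4) by (simp_all only: divmod_idx)
  show ?thesis unfolding id_tensor_def index_mat(1)[OF 1] using 2 by simp
qed

lemma T_sf: "sf (n*d) (ent (id_tensor n d Phi X)) w w'
   = (\<Sum>r<n. \<Sum>s<n. sf d (ent (Phi (mat d d (\<lambda>(x,y). X $$ (r*d+x, s*d+y))))) (\<lambda>i. w (r*d+i)) (\<lambda>i. w' (s*d+i)))"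
proof -
  have "sf (n*d) (ent (id_tensor n d Phi X)) w w'
     = (\<Sum>r<n. \<Sum>i<d. \<Sum>s<n. \<Sum>j<d. cnj (w (r*d+i)) * ent (Phi (mat d d (\<lambda>(x,y). X $$ (r*d+x, s*d+y)))) i j * w' (s*d+j))"
    unfolding sf_def sum_prod_idx
    by (intro sum.cong refl) (simp add: ent_def id_tensor_idx)
  also have "\<dots> = (\<Sum>r<n. \<Sum>s<n. sf d (ent (Phi (mat d d (\<lambda>(x,y). X $$ (r*d+x, s*d+y))))) (\<lambda>i. w (r*d+i)) (\<lambda>i. w' (s*d+i)))"
    unfolding sf_def by (rule sum_swap_mid)
  finally show ?thesis .
qed

lemma kron_sf: assumes "A \<in> carrier_mat m m" "B \<in> carrier_mat n n"
  shows "sf (m*n) (ent (kron A B)) w w' = (\<Sum>r<m. \<Sum>s<m. A $$ (r,s) * sf n (ent B) (\<lambda>i. w (r*n+i)) (\<lambda>i. w' (s*n+i)))"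
proof -
  have "sf (m*n) (ent (kron A B)) w w'
     = (\<Sum>r<m. \<Sum>i<n. \<Sum>s<m. \<Sum>j<n. cnj (w (r*n+i)) * (A $$ (r,s) * B $$ (i,j)) * w' (s*n+j))"
    unfolding sf_def sum_prod_idx ent_def
    by (intro sum.cong refl) (use assms in \<open>simp add: kron_idx\<close>)
  also have "\<dots> = (\<Sum>r<m. \<Sum>s<m. A $$ (r,s) * sf n (ent B) (\<lambda>i. w (r*n+i)) (\<lambda>i. w' (s*n+i)))"
    by (subst sum_swap_mid) (simp add: sf_def ent_def sum_distrib_left mult_ac)
  finally show ?thesis .
qed

lemma blk_single:
  "(\<Sum>i<off a b K. (\<Sum>k<K. if off a b k \<le> i \<and> i < off a b (Suc k) then g k (i - off a b k) else 0))
   = (\<Sum>k<K. \<Sum>i<a k * b k. g k i)"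
proof -
  have "(\<Sum>i<off a b K. (\<Sum>k<K. if off a b k \<le> i \<and> i < off a b (Suc k) then g k (i - off a b k) else 0))
    = (\<Sum>k<K. \<Sum>i<off a b K. if off a b k \<le> i \<and> i < off a b (Suc k) then g k (i - off a b k) else 0)"
    by (rule sum.swap)
  also have "\<dots> = (\<Sum>k<K. \<Sum>i<a k * b k. g k i)"
    by (rule sum.cong[OF refl]) (simp add: blk_ind)
  finally show ?thesis .
qed

lemma dim_blockP[simp]: "dim_row (blockP K a b \<delta> Z) = off a b K" "dim_col (blockP K a b \<delta> Z) = off a b K"
  by (simp_all add: blockP_def)

lemma blockP_idx_diag: "i < off a b K \<Longrightarrow> blockP K a b \<delta> Z $$ (i,i) = (\<Sum>k<K. if off a b k \<le> i \<and> i < off a b (Suc k) then kron (ptrace2 (a k) (b k)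
                    (mat (a k * b k) (a k * b k) (\<lambda>(x, y). Z $$ (off a b k + x, off a b k + y)))) (\<delta> k) $$ (i - off a b k, i - off a b k) else 0)"
  unfolding blockP_def by (simp cong: conj_cong)

lemma P_tr: assumes \<delta>: "\<forall>k<K. \<delta> k \<in> carrier_mat (b k) (b k)"
  and t: "\<forall>k<K. tr (\<delta> k) = 1"
  shows "tr (blockP K a b \<delta> Z) = (\<Sum>k<K. \<Sum>x<a k. ptrf a b k (ent Z) x x)"
proof -
  define Q where "Q k = kron (ptrace2 (a k) (b k)
                    (mat (a k * b k) (a k * b k) (\<lambda>(x, y). Z $$ (off a b k + x, off a b k + y)))) (\<delta> k)" for k
  have "tr (blockP K a b \<delta> Z) = (\<Sum>i<off a b K. (\<Sum>k<K. if off a b k \<le> i \<and> i < off a b (Suc k) then Q k $$ (i - off a b k, i - off a b k) else 0))"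
    unfolding tr_def Q_def by (intro sum.cong) (simp_all add: blockP_idx_diag)
  also have "\<dots> = (\<Sum>k<K. \<Sum>i<a k * b k. Q k $$ (i, i))"
    by (rule blk_single[where g="\<lambda>k i. Q k $$ (i, i)"])
  also have "\<dots> = (\<Sum>k<K. \<Sum>x<a k. ptrf a b k (ent Z) x x)"
  proof (rule sum.cong[OF refl])
    fix k assume "k \<in> {..<K}"
    hence k: "k < K" by simp
    have dk: "dim_row (\<delta> k) = b k" "dim_col (\<delta> k) = b k" using \<delta>[rule_format, OF k] by auto
    have Qe: "Q k $$ (x * b k + x2, x * b k + x2) = ptrf a b k (ent Z) x x * \<delta> k $$ (x2, x2)"
      if "x < a k" "x2 < b k" for x x2
    proof -
      have "Q k $$ (x * b k + x2, x * b k + x2) = ptrace2 (a k) (b k)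
                    (mat (a k * b k) (a k * b k) (\<lambda>(x, y). Z $$ (off a b k + x, off a b k + y))) $$ (x,x) * \<delta> k $$ (x2, x2)"
        unfolding Q_def by (rule kron_idx) (use that dk in \<open>auto simp: ptrace2_def\<close>)
      also have "ptrace2 (a k) (b k)
                    (mat (a k * b k) (a k * b k) (\<lambda>(x, y). Z $$ (off a b k + x, off a b k + y))) $$ (x,x)
           = ptrf a b k (ent Z) x x"
        using that mult_idx_lt[of x "a k" _ "b k"]
        by (simp add: ptrace2_idx ptrf_def ent_def add.assoc)
      finally show ?thesis .
    qed
    have "(\<Sum>i<a k * b k. Q k $$ (i, i)) = (\<Sum>x<a k. \<Sum>x2<b k. ptrf a b k (ent Z) x x * \<delta> k $$ (x2, x2))"
      unfolding sum_prod_idx by (intro sum.cong refl) (simp add: Qe)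
    also have "\<dots> = (\<Sum>x<a k. ptrf a b k (ent Z) x x * tr (\<delta> k))"
      by (simp add: sum_distrib_left tr_def dk)
    finally show "(\<Sum>i<a k * b k. Q k $$ (i, i)) = (\<Sum>x<a k. ptrf a b k (ent Z) x x)" using t[rule_format, OF k] by simp
  qed
  finally show ?thesis .
qed




definition dg :: "nat \<Rightarrow> (nat \<Rightarrow> real) \<Rightarrow> complex mat" where
  "dg d z = mat d d (\<lambda>(i,j). if i = j then complex_of_real (z i) else 0)"

definition zf :: "nat \<Rightarrow> (nat\<Rightarrow>nat) \<Rightarrow> (nat\<Rightarrow>nat) \<Rightarrow> (nat \<Rightarrow> real) \<Rightarrow> nat \<Rightarrow> real" where
  "zf K a b c i = (\<Sum>k<K. if off a b k \<le> i \<and> i < off a b (Suc k) then c k / real (b k) else 0)"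

definition sigc :: "nat \<Rightarrow> (nat\<Rightarrow>nat) \<Rightarrow> (nat\<Rightarrow>nat) \<Rightarrow> (nat \<Rightarrow> complex mat) \<Rightarrow> (nat \<Rightarrow> real) \<Rightarrow> complex mat" where
  "sigc K a b \<delta> c = blockP K a b \<delta> (dg (off a b K) (zf K a b c))"

lemma ptrf_dg: assumes "k < K" "x < a k" "y < a k"
  shows "ptrf a b k (ent (dg (off a b K) z)) x y
     = (if x = y then complex_of_real (\<Sum>l<b k. z (off a b k + x * b k + l)) else 0)"
proof (cases "x = y")
  case True
  thus ?thesis unfolding ptrf_def ent_def dg_def using idx_lt(2)[where K=K and a=a and b=b, OF assms(1,2)] by simp
next
  case False
  have "off a b k + x * b k + l \<noteq> off a b k + y * b k + l" if "l < b k" for l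
    using False that by simp
  thus ?thesis unfolding ptrf_def ent_def dg_def using idx_lt(2)[where K=K and a=a and b=b, OF assms(1,2)] idx_lt(2)[where K=K and a=a and b=b, OF assms(1,3)] False
    by simp
qed

lemma zf_blk: assumes "k < K" "x < a k" "l < b k"
  shows "zf K a b c (off a b k + x * b k + l) = c k / real (b k)"
  unfolding zf_def by (rule blk_pick[OF assms(1)]) (use idx_lt(1)[where K=K and a=a and b=b, OF assms] in auto)

lemma ptrf_sigc: assumes "k < K" "x < a k" "y < a k" "0 < b k"
  shows "ptrf a b k (ent (dg (off a b K) (zf K a b c))) x y = (if x = y then complex_of_real (c k) else 0)"
proof -
  have "(\<Sum>l<b k. zf K a b c (off a b k + x * b k + l)) = (\<Sum>l<b k. c k / real (b k))"
    by (intro sum.cong refl) (use zf_blk[where K=K and a=a and b=b, OF assms(1,2)] in auto)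
  also have "\<dots> = c k" using assms by simp
  finally have eq: "(\<Sum>l<b k. zf K a b c (off a b k + x * b k + l)) = c k" .
  show ?thesis unfolding ptrf_dg[where K=K and a=a and b=b, OF assms(1-3)] eq by simp
qed

lemma sigc_sf: assumes \<delta>: "\<forall>k<K. \<delta> k \<in> carrier_mat (b k) (b k)"
  and b: "\<forall>k<K. 0 < b k"
  shows "sf (off a b K) (ent (sigc K a b \<delta> c)) u v
    = (\<Sum>k<K. complex_of_real (c k) * (\<Sum>x<a k. sf (b k) (ent (\<delta> k)) (Ub a b u k x) (Ub a b v k x)))"
  unfolding sigc_def P_sf[OF \<delta>]
proof (rule sum.cong[OF refl])
  fix k assume "k \<in> {..<K}"
  hence k: "k < K" by simp
  have "(\<Sum>x<a k. \<Sum>y<a k. ptrf a b k (ent (dg (off a b K) (zf K a b c))) x y * sf (b k) (ent (\<delta> k)) (Ub a b u k x) (Ub a b v k y))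
    = (\<Sum>x<a k. \<Sum>y<a k. (if x = y then complex_of_real (c k) * sf (b k) (ent (\<delta> k)) (Ub a b u k x) (Ub a b v k y) else 0))"
    by (intro sum.cong refl) (simp add: ptrf_sigc[where K=K and a=a and b=b, OF k _ _ b[rule_format, OF k]])
  also have "\<dots> = complex_of_real (c k) * (\<Sum>x<a k. sf (b k) (ent (\<delta> k)) (Ub a b u k x) (Ub a b v k x))"
    by (simp add: sum_distrib_left)
  finally show "(\<Sum>x<a k. \<Sum>y<a k. ptrf a b k (ent (dg (off a b K) (zf K a b c))) x y * sf (b k) (ent (\<delta> k)) (Ub a b u k x) (Ub a b v k y))
    = complex_of_real (c k) * (\<Sum>x<a k. sf (b k) (ent (\<delta> k)) (Ub a b u k x) (Ub a b v k x))" .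
qed

lemma sigc_tr: assumes \<delta>: "\<forall>k<K. \<delta> k \<in> carrier_mat (b k) (b k)"
  and t: "\<forall>k<K. tr (\<delta> k) = 1"
  and b: "\<forall>k<K. 0 < b k"
  shows "tr (sigc K a b \<delta> c) = complex_of_real (\<Sum>k<K. real (a k) * c k)"
  unfolding sigc_def P_tr[OF \<delta> t] of_real_sum
  by (intro sum.cong refl) (simp add: ptrf_sigc b)

lemma sigc_psdf: assumes \<delta>: "\<forall>k<K. \<delta> k \<in> carrier_mat (b k) (b k)"
  and b: "\<forall>k<K. 0 < b k"
  and P: "\<forall>k<K. psd (b k) (\<delta> k)"
  and c: "\<forall>k<K. 0 \<le> c k"
  shows "psdf (off a b K) (ent (sigc K a b \<delta> c))"
  unfolding psdf_def sigc_sf[OF \<delta> b]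
proof
  fix u
  have "\<forall>k\<in>{..<K}. Im (complex_of_real (c k) * (\<Sum>x<a k. sf (b k) (ent (\<delta> k)) (Ub a b u k x) (Ub a b u k x))) = 0
       \<and> 0 \<le> Re (complex_of_real (c k) * (\<Sum>x<a k. sf (b k) (ent (\<delta> k)) (Ub a b u k x) (Ub a b u k x)))"
  proof
    fix k assume "k \<in> {..<K}"
    hence k: "k < K" by simp
    have pk: "psdf (b k) (ent (\<delta> k))" by (rule psd_psdf[OF P[rule_format, OF k]])
    have "Im (\<Sum>x<a k. sf (b k) (ent (\<delta> k)) (Ub a b u k x) (Ub a b u k x)) = 0"
      using pk unfolding psdf_def Im_sum by simp
    moreover have "0 \<le> Re (\<Sum>x<a k. sf (b k) (ent (\<delta> k)) (Ub a b u k x) (Ub a b u k x))"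
      using pk unfolding psdf_def Re_sum by (simp add: sum_nonneg)
    ultimately show "Im (complex_of_real (c k) * (\<Sum>x<a k. sf (b k) (ent (\<delta> k)) (Ub a b u k x) (Ub a b u k x))) = 0
       \<and> 0 \<le> Re (complex_of_real (c k) * (\<Sum>x<a k. sf (b k) (ent (\<delta> k)) (Ub a b u k x) (Ub a b u k x)))"
      using c[rule_format, OF k] by simp
  qed
  thus "Im (\<Sum>k<K. complex_of_real (c k) * (\<Sum>x<a k. sf (b k) (ent (\<delta> k)) (Ub a b u k x) (Ub a b u k x))) = 0 \<and>
         0 \<le> Re (\<Sum>k<K. complex_of_real (c k) * (\<Sum>x<a k. sf (b k) (ent (\<delta> k)) (Ub a b u k x) (Ub a b u k x)))"
  proof -
    define X where "X k = complex_of_real (c k) * (\<Sum>x<a k. sf (b k) (ent (\<delta> k)) (Ub a b u k x) (Ub a b u k x))" for k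
    assume H0: "\<forall>k\<in>{..<K}. Im (complex_of_real (c k) * (\<Sum>x<a k. sf (b k) (ent (\<delta> k)) (Ub a b u k x) (Ub a b u k x))) = 0
       \<and> 0 \<le> Re (complex_of_real (c k) * (\<Sum>x<a k. sf (b k) (ent (\<delta> k)) (Ub a b u k x) (Ub a b u k x)))"
    hence H: "\<forall>k\<in>{..<K}. Im (X k) = 0 \<and> 0 \<le> Re (X k)" unfolding X_def .
    have "Im (\<Sum>k<K. X k) = 0" unfolding Im_sum by (rule sum.neutral) (use H in blast)
    moreover have "0 \<le> Re (\<Sum>k<K. X k)" unfolding Re_sum by (rule sum_nonneg) (use H in blast)
    ultimately show ?thesis unfolding X_def by blast
  qed
qed

lemma sigc_states: assumes \<delta>: "\<forall>k<K. \<delta> k \<in> states (b k)"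
  and b: "\<forall>k<K. 0 < b k"
  and c: "\<forall>k<K. 0 \<le> c k"
  and s: "(\<Sum>k<K. real (a k) * c k) = 1"
  shows "sigc K a b \<delta> c \<in> states (off a b K)"
proof -
  have dc: "\<forall>k<K. \<delta> k \<in> carrier_mat (b k) (b k)" using \<delta> unfolding states_def psd_def by auto
  have dt: "\<forall>k<K. tr (\<delta> k) = 1" using \<delta> unfolding states_def by auto
  have dp: "\<forall>k<K. psd (b k) (\<delta> k)" using \<delta> unfolding states_def by auto
  have "psd (off a b K) (sigc K a b \<delta> c)"
    by (rule psdI) (auto simp: sigc_def intro: sigc_psdf[OF dc b dp c, unfolded sigc_def])
  moreover have "tr (sigc K a b \<delta> c) = 1" unfolding sigc_tr[OF dc dt b] s by simp
  ultimately show ?thesis unfolding states_def by simp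
qed




definition Vf :: "complex vec \<Rightarrow> nat \<Rightarrow> (nat\<Rightarrow>nat) \<Rightarrow> (nat\<Rightarrow>nat) \<Rightarrow> nat \<Rightarrow> nat \<Rightarrow> nat \<Rightarrow> nat \<Rightarrow> complex" where
  "Vf v d a b r k x l = v $ (r*d + (off a b k + x * b k + l))"

definition Zf :: "complex vec \<Rightarrow> (nat \<Rightarrow> complex) \<Rightarrow> nat \<Rightarrow> (nat\<Rightarrow>nat) \<Rightarrow> (nat\<Rightarrow>nat) \<Rightarrow> nat \<Rightarrow> nat \<Rightarrow> nat \<Rightarrow> complex" where
  "Zf v w d a b k l = (\<lambda>x2. \<Sum>r<d. \<Sum>x<a k. cnj (Vf v d a b r k x l) * Ub a b (\<lambda>i. w (r*d+i)) k x x2)"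

lemma outer_idx: "i < n \<Longrightarrow> j < n \<Longrightarrow> outer n v $$ (i,j) = v $ i * cnj (v $ j)"
  by (simp add: outer_def)

lemma ptrf_pure: assumes "k < K" "x < a k" "y < a k" "r < d" "s < d" "d = off a b K"
  shows "ptrf a b k (ent (mat d d (\<lambda>(x,y). outer (d*d) v $$ (r*d+x, s*d+y)))) x y
    = (\<Sum>l<b k. Vf v d a b r k x l * cnj (Vf v d a b s k y l))"
  unfolding ptrf_def
proof (rule sum.cong[OF refl])
  fix l assume "l \<in> {..<b k}"
  hence l: "l < b k" by simp
  have i1: "off a b k + x * b k + l < d" using idx_lt(2)[where K=K and a=a and b=b, OF assms(1,2) l] assms(6) by simp
  have i2: "off a b k + y * b k + l < d" using idx_lt(2)[where K=K and a=a and b=b, OF assms(1,3) l] assms(6) by simp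
  have j1: "r*d + (off a b k + x * b k + l) < d*d" using mult_idx_lt[OF assms(4) i1] by (simp add: mult.commute)
  have j2: "s*d + (off a b k + y * b k + l) < d*d" using mult_idx_lt[OF assms(5) i2] by (simp add: mult.commute)
  show "ent (mat d d (\<lambda>(x,y). outer (d*d) v $$ (r*d+x, s*d+y))) (off a b k + x * b k + l) (off a b k + y * b k + l)
     = Vf v d a b r k x l * cnj (Vf v d a b s k y l)"
    unfolding ent_def Vf_def using i1 i2 j1 j2 by (simp add: outer_idx)
qed

lemma sf_Zf: "sf n M (Zf v w d a b k l) (Zf v w d a b k l)
   = (\<Sum>r<d. \<Sum>x<a k. \<Sum>s<d. \<Sum>y<a k. Vf v d a b r k x l * cnj (Vf v d a b s k y l)
        * sf n M (Ub a b (\<lambda>i. w (r*d+i)) k x) (Ub a b (\<lambda>i. w (s*d+i)) k y))"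
  unfolding Zf_def
  by (simp add: sf_sum_left sf_sum_right sf_scale_left sf_scale_right sum_distrib_left mult.assoc)

lemma pure_T: assumes \<delta>: "\<forall>k<K. \<delta> k \<in> carrier_mat (b k) (b k)" and d: "d = off a b K"
  shows "sf (d*d) (ent (id_tensor d d (blockP K a b \<delta>) (outer (d*d) v))) w w
    = (\<Sum>k<K. \<Sum>l<b k. sf (b k) (ent (\<delta> k)) (Zf v w d a b k l) (Zf v w d a b k l))"
proof -
  let ?S = "\<lambda>k r s x y. sf (b k) (ent (\<delta> k)) (Ub a b (\<lambda>i. w (r*d+i)) k x) (Ub a b (\<lambda>i. w (s*d+i)) k y)"
  let ?M = "\<lambda>r s. mat d d (\<lambda>(x,y). outer (d*d) v $$ (r*d+x, s*d+y))"
  have "sf (d*d) (ent (id_tensor d d (blockP K a b \<delta>) (outer (d*d) v))) w w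
     = (\<Sum>r<d. \<Sum>s<d. \<Sum>k<K. \<Sum>x<a k. \<Sum>y<a k. ptrf a b k (ent (?M r s)) x y * ?S k r s x y)"
    unfolding T_sf d P_sf[OF \<delta>] ..
  also have "\<dots> = (\<Sum>k<K. \<Sum>r<d. \<Sum>s<d. \<Sum>x<a k. \<Sum>y<a k. ptrf a b k (ent (?M r s)) x y * ?S k r s x y)"
    by (rule sum_swap3)
  also have "\<dots> = (\<Sum>k<K. \<Sum>l<b k. sf (b k) (ent (\<delta> k)) (Zf v w d a b k l) (Zf v w d a b k l))"
  proof (rule sum.cong[OF refl])
    fix k assume "k \<in> {..<K}"
    hence k: "k < K" by simp
    let ?A = "\<lambda>r x l. Vf v d a b r k x l"
    have "(\<Sum>r<d. \<Sum>s<d. \<Sum>x<a k. \<Sum>y<a k. ptrf a b k (ent (?M r s)) x y * ?S k r s x y)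
       = (\<Sum>r<d. \<Sum>s<d. \<Sum>x<a k. \<Sum>y<a k. \<Sum>l<b k. ?A r x l * cnj (?A s y l) * ?S k r s x y)"
      by (intro sum.cong refl) (simp add: ptrf_pure[OF k _ _ _ _ d] sum_distrib_right)
    also have "\<dots> = (\<Sum>r<d. \<Sum>x<a k. \<Sum>s<d. \<Sum>y<a k. \<Sum>l<b k. ?A r x l * cnj (?A s y l) * ?S k r s x y)"
      by (rule sum.cong[OF refl], rule sum.swap)
    also have "\<dots> = (\<Sum>l<b k. \<Sum>r<d. \<Sum>x<a k. \<Sum>s<d. \<Sum>y<a k. ?A r x l * cnj (?A s y l) * ?S k r s x y)"
      by (simp only: sum.swap[where B="{..<b k}"])
    also have "\<dots> = (\<Sum>l<b k. sf (b k) (ent (\<delta> k)) (Zf v w d a b k l) (Zf v w d a b k l))"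
      unfolding sf_Zf ..
    finally show "(\<Sum>r<d. \<Sum>s<d. \<Sum>x<a k. \<Sum>y<a k. ptrf a b k (ent (?M r s)) x y * ?S k r s x y)
       = (\<Sum>l<b k. sf (b k) (ent (\<delta> k)) (Zf v w d a b k l) (Zf v w d a b k l))" .
  qed
  finally show ?thesis .
qed




lemma Dmax_le: assumes c: "0 < c"
  and P: "psd (dim_row \<rho>) (mat (dim_row \<rho>) (dim_row \<rho>) (\<lambda>(i,j). complex_of_real c * \<sigma> $$ (i,j) - \<rho> $$ (i,j)))"
  shows "Dmax \<rho> \<sigma> \<le> ereal (log 2 c)"
proof -
  define n where "n = dim_row \<rho>"
  define S where "S = {t::real. t \<ge> 0 \<and> psd n (mat n n (\<lambda>(i, j). of_real t * \<sigma> $$ (i, j) - \<rho> $$ (i, j)))}"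
  have cS: "c \<in> S" unfolding S_def n_def using c P by simp
  have bdd: "bdd_below S" unfolding S_def by (rule bdd_belowI[of _ 0]) auto
  have le: "Inf S \<le> c" by (rule cInf_lower[OF cS bdd])
  have ge: "0 \<le> Inf S" by (rule cInf_greatest) (use cS in \<open>auto simp: S_def\<close>)
  have D: "Dmax \<rho> \<sigma> = (if S = {} then \<infinity> else if Inf S = 0 then -\<infinity> else ereal (log 2 (Inf S)))"
    unfolding Dmax_def Let_def S_def n_def ..
  show ?thesis
  proof (cases "Inf S = 0")
    case True thus ?thesis unfolding D using cS by auto
  next
    case False
    hence "0 < Inf S" using ge by simp
    hence "log 2 (Inf S) \<le> log 2 c" using le c by simp
    thus ?thesis unfolding D using cS False by auto
  qed
qed

lemma sf_lin_mat: "sf n (\<lambda>i j. c * A i j - B i j) u v = c * sf n A u v - sf n B u v"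
  unfolding sf_def by (simp add: sum_subtractf sum_distrib_left algebra_simps)

lemma psd_diff: assumes n: "dim_row \<rho> = n"
  and I1: "\<And>w. Im (sf n (ent \<sigma>) w w) = 0" and I2: "\<And>w. Im (sf n (ent \<rho>) w w) = 0"
  and R: "\<And>w. Re (sf n (ent \<rho>) w w) \<le> c * Re (sf n (ent \<sigma>) w w)"
  shows "psd (dim_row \<rho>) (mat (dim_row \<rho>) (dim_row \<rho>) (\<lambda>(i,j). complex_of_real c * \<sigma> $$ (i,j) - \<rho> $$ (i,j)))"
  unfolding n
proof (rule psdI)
  show "mat n n (\<lambda>(i,j). complex_of_real c * \<sigma> $$ (i,j) - \<rho> $$ (i,j)) \<in> carrier_mat n n" by simp
  have e: "sf n (ent (mat n n (\<lambda>(i,j). complex_of_real c * \<sigma> $$ (i,j) - \<rho> $$ (i,j)))) w w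
     = complex_of_real c * sf n (ent \<sigma>) w w - sf n (ent \<rho>) w w" for w
  proof -
    have "sf n (ent (mat n n (\<lambda>(i,j). complex_of_real c * \<sigma> $$ (i,j) - \<rho> $$ (i,j)))) w w
       = sf n (\<lambda>i j. complex_of_real c * ent \<sigma> i j - ent \<rho> i j) w w"
      by (rule sf_cong_M) (simp add: ent_def)
    thus ?thesis by (simp add: sf_lin_mat)
  qed
  show "psdf n (ent (mat n n (\<lambda>(i,j). complex_of_real c * \<sigma> $$ (i,j) - \<rho> $$ (i,j))))"
    unfolding psdf_def e using I1 I2 R by simp
qed

lemma sf_sum_mat: "finite J \<Longrightarrow> sf n (\<lambda>i k. \<Sum>j\<in>J. f j i k) u v = (\<Sum>j\<in>J. sf n (f j) u v)"
  unfolding sf_def by (simp add: sum_distrib_left sum_distrib_right sum.swap[of _ J])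

lemma sf_scale_mat: "sf n (\<lambda>i k. c * A i k) u v = c * sf n A u v"
  unfolding sf_def by (simp add: sum_distrib_left mult_ac)

lemma delta_facts: assumes "\<forall>k<K. \<delta> k \<in> states (b k) \<and> pd (b k) (\<delta> k)"
  shows "\<forall>k<K. \<delta> k \<in> carrier_mat (b k) (b k)" "\<forall>k<K. tr (\<delta> k) = 1" "\<forall>k<K. psd (b k) (\<delta> k)"
    "\<forall>k<K. 0 < b k" "\<forall>k<K. psdf (b k) (ent (\<delta> k))"
proof -
  show "\<forall>k<K. \<delta> k \<in> carrier_mat (b k) (b k)" "\<forall>k<K. tr (\<delta> k) = 1" "\<forall>k<K. psd (b k) (\<delta> k)"
    using assms unfolding states_def psd_def by auto
  thus "\<forall>k<K. psdf (b k) (ent (\<delta> k))" using psd_psdf by blast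
  show "\<forall>k<K. 0 < b k"
  proof (intro allI impI)
    fix k assume k: "k < K"
    have "\<delta> k \<in> carrier_mat (b k) (b k)" "tr (\<delta> k) = 1" using assms k unfolding states_def psd_def by auto
    thus "0 < b k" by (cases "b k") (auto simp: tr_def)
  qed
qed

lemma Re_sf_nonneg_sum: "\<forall>k<K. psdf (b k) (ent (\<delta> k)) \<Longrightarrow> k < K \<Longrightarrow> 0 \<le> Re (sf (b k) (ent (\<delta> k)) u u)"
  using psdf_nonneg by blast




lemma pure_sum1: assumes d: "d = off a b K" and v: "(\<Sum>i<d*d. (cmod (v $ i))\<^sup>2) = 1"
  shows "(\<Sum>k<K. \<Sum>l<b k. \<Sum>r<d. \<Sum>x<a k. (cmod (Vf v d a b r k x l))\<^sup>2) = 1"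
proof -
  have "1 = (\<Sum>r<d. \<Sum>i<off a b K. (cmod (v $ (r*d+i)))\<^sup>2)" using v d by (simp add: sum_prod_idx)
  also have "\<dots> = (\<Sum>r<d. \<Sum>k<K. \<Sum>x<a k. \<Sum>l<b k. (cmod (Vf v d a b r k x l))\<^sup>2)"
    unfolding full_sum Vf_def ..
  also have "\<dots> = (\<Sum>k<K. \<Sum>r<d. \<Sum>x<a k. \<Sum>l<b k. (cmod (Vf v d a b r k x l))\<^sup>2)"
    by (rule sum.swap)
  also have "\<dots> = (\<Sum>k<K. \<Sum>l<b k. \<Sum>r<d. \<Sum>x<a k. (cmod (Vf v d a b r k x l))\<^sup>2)"
    by (rule sum.cong[OF refl]) (simp only: sum.swap[where B="{..<b _}"])
  finally show ?thesis by simp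
qed

lemma Z_wCS: assumes P: "psdf n M"
  shows "Re (sf n M (Zf v w d a b k l) (Zf v w d a b k l))
    \<le> (\<Sum>r<d. \<Sum>x<a k. (cmod (Vf v d a b r k x l))\<^sup>2) * (\<Sum>r<d. \<Sum>x<a k. Re (sf n M (Ub a b (\<lambda>i. w (r*d+i)) k x) (Ub a b (\<lambda>i. w (r*d+i)) k x)))"
proof -
  define J where "J = {..<d} \<times> {..<a k}"
  define cq where "cq = (\<lambda>(r,x). cnj (Vf v d a b r k x l))"
  define fq where "fq = (\<lambda>(r,x). Ub a b (\<lambda>i. w (r*d+i)) k x)"
  have Z: "Zf v w d a b k l = (\<lambda>x2. \<Sum>q\<in>J. cq q * fq q x2)"
    unfolding Zf_def J_def cq_def fq_def by (simp add: sum.cartesian_product split_def)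
  have "Re (sf n M (Zf v w d a b k l) (Zf v w d a b k l)) \<le> (\<Sum>q\<in>J. (cmod (cq q))\<^sup>2) * (\<Sum>q\<in>J. Re (sf n M (fq q) (fq q)))"
    unfolding Z by (rule sf_wCS[OF P]) (simp add: J_def)
  also have "(\<Sum>q\<in>J. (cmod (cq q))\<^sup>2) = (\<Sum>r<d. \<Sum>x<a k. (cmod (Vf v d a b r k x l))\<^sup>2)"
    unfolding J_def cq_def by (simp add: sum.cartesian_product split_def)
  also have "(\<Sum>q\<in>J. Re (sf n M (fq q) (fq q))) = (\<Sum>r<d. \<Sum>x<a k. Re (sf n M (Ub a b (\<lambda>i. w (r*d+i)) k x) (Ub a b (\<lambda>i. w (r*d+i)) k x)))"
    unfolding J_def fq_def by (simp add: sum.cartesian_product split_def)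
  finally show ?thesis .
qed


lemma pure_state_obtain: assumes "\<psi> \<in> pure_states n"
  obtains v where "\<psi> = outer n v" "v \<in> carrier_vec n" "(\<Sum>i<n. (cmod (v $ i))\<^sup>2) = 1"
  using assms unfolding pure_states_def by blast

lemma dpos_exists: assumes "0 < off a b K" shows "\<exists>k<K. 0 < a k"
proof (rule ccontr)
  assume "\<not> (\<exists>k<K. 0 < a k)"
  hence "\<forall>k<K. a k = 0" by auto
  hence "off a b K = 0" unfolding off_def by simp
  thus False using assms by simp
qed

lemma Max_facts: assumes "0 < off a b K"
  shows "0 < real (Max (a ` {..<K}))" "\<And>k. k < K \<Longrightarrow> real (a k) \<le> real (Max (a ` {..<K}))"
proof -
  obtain k0 where k0: "k0 < K" "0 < a k0" using dpos_exists[OF assms] by blast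
  show "\<And>k. k < K \<Longrightarrow> real (a k) \<le> real (Max (a ` {..<K}))" by simp
  have "a k0 \<le> Max (a ` {..<K})" using k0 by simp
  hence "0 < Max (a ` {..<K})" using k0(2) by (rule less_le_trans[rotated])
  thus "0 < real (Max (a ` {..<K}))" by simp
qed

lemma claim1_pt: assumes A: "\<forall>k<K. \<delta> k \<in> states (b k) \<and> pd (b k) (\<delta> k)"
  and d: "d = off a b K" and \<psi>: "\<psi> \<in> pure_states (d*d)"
  shows "(INF \<sigma>\<in>states d. Dmax (id_tensor d d (blockP K a b \<delta>) \<psi>) (kron (1\<^sub>m d) \<sigma>))
     \<le> ereal (log 2 (real (Max (a ` {..<K}))))"
proof -
  obtain v where v: "\<psi> = outer (d*d) v" "v \<in> carrier_vec (d*d)" "(\<Sum>i<d*d. (cmod (v $ i))\<^sup>2) = 1"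
    using pure_state_obtain[OF \<psi>] by blast
  note DF = delta_facts[OF A]
  have dpos: "0 < off a b K" using v(3) d by (cases "off a b K") auto
  define c where "c = real (Max (a ` {..<K}))"
  have c0: "0 < c" and ca: "\<And>k. k<K \<Longrightarrow> real (a k) \<le> c" using Max_facts[OF dpos] unfolding c_def by auto
  define p where "p k = (\<Sum>l<b k. \<Sum>r<d. \<Sum>x<a k. (cmod (Vf v d a b r k x l))\<^sup>2)" for k
  define cc where "cc k = p k / real (a k)" for k
  define \<sigma> where "\<sigma> = sigc K a b \<delta> cc"
  have p0: "0 \<le> p k" for k unfolding p_def by (intro sum_nonneg) auto
  have cc0: "\<forall>k<K. 0 \<le> cc k" unfolding cc_def using p0 by simp
  have ap: "real (a k) * cc k = p k" for k
    by (cases "a k = 0") (auto simp: cc_def p_def)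
  have "\<sigma> \<in> states (off a b K)" unfolding \<sigma>_def
    by (rule sigc_states) (use A DF(4) cc0 pure_sum1[OF d v(3)] in \<open>auto simp: ap p_def\<close>)
  hence \<sigma>S: "\<sigma> \<in> states d" using d by simp
  let ?T = "id_tensor d d (blockP K a b \<delta>) \<psi>"
  let ?s = "\<lambda>k u. sf (b k) (ent (\<delta> k)) u u"
  let ?W = "\<lambda>w r k x. Ub a b (\<lambda>i. w (r*d+i)) k x"
  have dimT: "dim_row ?T = d*d" by (simp add: id_tensor_def)
  have sig_form: "sf (d*d) (ent (kron (1\<^sub>m d) \<sigma>)) w w
      = (\<Sum>r<d. \<Sum>k<K. complex_of_real (cc k) * (\<Sum>x<a k. ?s k (Ub a b (\<lambda>i. w (r*d+i)) k x)))" for w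
  proof -
    have sc: "\<sigma> \<in> carrier_mat d d" using \<sigma>S unfolding states_def psd_def by simp
    have "sf (d*d) (ent (kron (1\<^sub>m d) \<sigma>)) w w
       = (\<Sum>r<d. \<Sum>s<d. 1\<^sub>m d $$ (r,s) * sf d (ent \<sigma>) (\<lambda>i. w (r*d+i)) (\<lambda>i. w (s*d+i)))"
      by (rule kron_sf[OF one_carrier_mat sc])
    also have "\<dots> = (\<Sum>r<d. sf d (ent \<sigma>) (\<lambda>i. w (r*d+i)) (\<lambda>i. w (r*d+i)))"
      by (rule sum.cong[OF refl]) simp
    also have "\<dots> = (\<Sum>r<d. \<Sum>k<K. complex_of_real (cc k) * (\<Sum>x<a k. ?s k (Ub a b (\<lambda>i. w (r*d+i)) k x)))"
      unfolding \<sigma>_def d by (intro sum.cong refl) (rule sigc_sf[OF DF(1) DF(4)])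
    finally show ?thesis .
  qed
  have rho_form: "sf (d*d) (ent ?T) w w = (\<Sum>k<K. \<Sum>l<b k. ?s k (Zf v w d a b k l))" for w
    unfolding v(1) by (rule pure_T[OF DF(1) d])
  have psdk: "\<And>k. k<K \<Longrightarrow> psdf (b k) (ent (\<delta> k))" using DF(5) by blast
  have "psd (dim_row ?T) (mat (dim_row ?T) (dim_row ?T) (\<lambda>(i,j). complex_of_real c * kron (1\<^sub>m d) \<sigma> $$ (i,j) - ?T $$ (i,j)))"
  proof (rule psd_diff[OF dimT])
    fix w
    show "Im (sf (d*d) (ent (kron (1\<^sub>m d) \<sigma>)) w w) = 0"
      unfolding sig_form Im_sum using psdk psdf_def by (simp add: Im_sum)
    show "Im (sf (d*d) (ent ?T) w w) = 0"
      unfolding rho_form Im_sum using psdk psdf_def by simp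
    have "Re (sf (d*d) (ent ?T) w w) = (\<Sum>k<K. \<Sum>l<b k. Re (?s k (Zf v w d a b k l)))"
      unfolding rho_form Re_sum ..
    also have "\<dots> \<le> (\<Sum>k<K. c * cc k * (\<Sum>r<d. \<Sum>x<a k. Re (?s k (?W w r k x))))"
    proof (rule sum_mono)
      fix k assume "k \<in> {..<K}"
      hence k: "k < K" by simp
      have N: "0 \<le> (\<Sum>r<d. \<Sum>x<a k. Re (?s k (?W w r k x)))"
        by (intro sum_nonneg) (use psdf_nonneg[OF psdk[OF k]] in auto)
      have "(\<Sum>l<b k. Re (?s k (Zf v w d a b k l)))
         \<le> (\<Sum>l<b k. (\<Sum>r<d. \<Sum>x<a k. (cmod (Vf v d a b r k x l))\<^sup>2) * (\<Sum>r<d. \<Sum>x<a k. Re (?s k (?W w r k x))))"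
        by (rule sum_mono) (rule Z_wCS[where v=v and w=w and d=d and a=a and b=b and k=k, OF psdk[OF k]])
      also have "\<dots> = p k * (\<Sum>r<d. \<Sum>x<a k. Re (?s k (?W w r k x)))"
        unfolding p_def by (simp add: sum_distrib_right)
      also have "\<dots> \<le> c * cc k * (\<Sum>r<d. \<Sum>x<a k. Re (?s k (?W w r k x)))"
      proof (rule mult_right_mono[OF _ N])
        show "p k \<le> c * cc k"
        proof (cases "a k = 0")
          case True thus ?thesis by (simp add: p_def cc_def)
        next
          case False
          hence "p k = real (a k) * cc k" using ap by simp
          also have "\<dots> \<le> c * cc k" by (rule mult_right_mono[OF ca[OF k]]) (use cc0 k in auto)
          finally show ?thesis .
        qed
      qed
      finally show "(\<Sum>l<b k. Re (?s k (Zf v w d a b k l))) \<le> c * cc k * (\<Sum>r<d. \<Sum>x<a k. Re (?s k (?W w r k x)))" .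
    qed
    also have "\<dots> = c * Re (sf (d*d) (ent (kron (1\<^sub>m d) \<sigma>)) w w)"
      unfolding sig_form Re_sum
      by (simp add: sum_distrib_left sum_distrib_right mult_ac sum.swap[of _ "{..<d}"])
    finally show "Re (sf (d*d) (ent ?T) w w) \<le> c * Re (sf (d*d) (ent (kron (1\<^sub>m d) \<sigma>)) w w)" .
  qed
  hence "Dmax ?T (kron (1\<^sub>m d) \<sigma>) \<le> ereal (log 2 c)" by (rule Dmax_le[OF c0])
  thus ?thesis unfolding c_def[symmetric] by (rule INF_lower2[OF \<sigma>S])
qed




definition Gf :: "complex vec \<Rightarrow> (nat \<Rightarrow> complex) \<Rightarrow> nat \<Rightarrow> (nat\<Rightarrow>nat) \<Rightarrow> (nat\<Rightarrow>nat) \<Rightarrow> nat \<Rightarrow> nat \<Rightarrow> nat \<Rightarrow> nat \<Rightarrow> nat \<Rightarrow> complex" where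
  "Gf v w d a b k y l x = (\<lambda>x2. \<Sum>r<d. cnj (Vf v d a b r k y l) * Ub a b (\<lambda>i. w (r*d+i)) k x x2)"

definition Hf :: "complex vec \<Rightarrow> (nat \<Rightarrow> complex) \<Rightarrow> nat \<Rightarrow> (nat\<Rightarrow>nat) \<Rightarrow> (nat\<Rightarrow>nat) \<Rightarrow> nat \<Rightarrow> nat \<Rightarrow> nat \<Rightarrow> nat \<Rightarrow> complex" where
  "Hf v w d a b k i x = (\<lambda>x2. \<Sum>s<d. cnj (v $ (s*d+i)) * Ub a b (\<lambda>j. w (s*d+j)) k x x2)"

lemma Gf_Hf: "Gf v w d a b k y l x = Hf v w d a b k (off a b k + y * b k + l) x"
  unfolding Gf_def Hf_def Vf_def ..

lemma Zf_Gf: "Zf v w d a b k l = (\<lambda>x2. \<Sum>x<a k. Gf v w d a b k x l x x2)"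
  unfolding Zf_def Gf_def by (rule ext) (rule sum.swap)

lemma Z_sumCS: assumes P: "psdf n M"
  shows "Re (sf n M (Zf v w d a b k l) (Zf v w d a b k l))
    \<le> real (a k) * (\<Sum>x<a k. Re (sf n M (Gf v w d a b k x l x) (Gf v w d a b k x l x)))"
  unfolding Zf_Gf using sf_sumCS[OF P, of "{..<a k}" "\<lambda>x. Gf v w d a b k x l x"] by simp

lemma G_to_H: assumes P: "\<forall>k<K. psdf (b k) (ent (\<delta> k))" and k: "k < K" and d: "d = off a b K"
  shows "(\<Sum>l<b k. \<Sum>x<a k. Re (sf (b k) (ent (\<delta> k)) (Gf v w d a b k x l x) (Gf v w d a b k x l x)))
    \<le> (\<Sum>x<a k. \<Sum>i<d. Re (sf (b k) (ent (\<delta> k)) (Hf v w d a b k i x) (Hf v w d a b k i x)))"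
proof -
  let ?f = "\<lambda>i x. Re (sf (b k) (ent (\<delta> k)) (Hf v w d a b k i x) (Hf v w d a b k i x))"
  have f0: "0 \<le> ?f i x" for i x using P k psdf_nonneg by blast
  have "(\<Sum>l<b k. \<Sum>x<a k. Re (sf (b k) (ent (\<delta> k)) (Gf v w d a b k x l x) (Gf v w d a b k x l x)))
     = (\<Sum>x<a k. \<Sum>l<b k. ?f (off a b k + x * b k + l) x)"
    unfolding Gf_Hf by (rule sum.swap)
  also have "\<dots> \<le> (\<Sum>x<a k. \<Sum>i<d. ?f i x)"
  proof (rule sum_mono)
    fix x assume "x \<in> {..<a k}"
    have "(\<Sum>l<b k. ?f (off a b k + x * b k + l) x) \<le> (\<Sum>y<a k. \<Sum>l<b k. ?f (off a b k + y * b k + l) x)"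
      by (rule member_le_sum[where f="\<lambda>y. \<Sum>l<b k. ?f (off a b k + y * b k + l) x", OF \<open>x \<in> {..<a k}\<close>])
         (auto intro: sum_nonneg f0)
    also have "\<dots> \<le> (\<Sum>k'<K. \<Sum>y<a k'. \<Sum>l<b k'. ?f (off a b k' + y * b k' + l) x)"
      by (rule member_le_sum[where f="\<lambda>k'. \<Sum>y<a k'. \<Sum>l<b k'. ?f (off a b k' + y * b k' + l) x"])
         (use k in \<open>auto intro: sum_nonneg f0\<close>)
    also have "\<dots> = (\<Sum>i<d. ?f i x)" unfolding d full_sum ..
    finally show "(\<Sum>l<b k. ?f (off a b k + x * b k + l) x) \<le> (\<Sum>i<d. ?f i x)" .
  qed
  finally show ?thesis .
qed


lemma sf_Hf: "sf n M (Hf v w d a b k i x) (Hf v w d a b k i x)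
  = (\<Sum>r<d. \<Sum>s<d. v $ (r*d+i) * cnj (v $ (s*d+i)) * sf n M (Ub a b (\<lambda>j. w (r*d+j)) k x) (Ub a b (\<lambda>j. w (s*d+j)) k x))"
  unfolding Hf_def
  by (simp add: sf_sum_left sf_sum_right sf_scale_left sf_scale_right sum_distrib_left mult.assoc)

lemma ptrace2_pure: assumes "r < d" "s < d"
  shows "ptrace2 d d (outer (d*d) v) $$ (r,s) = (\<Sum>i<d. v $ (r*d+i) * cnj (v $ (s*d+i)))"
proof -
  have "ptrace2 d d (outer (d*d) v) $$ (r,s) = (\<Sum>i<d. outer (d*d) v $$ (r*d+i, s*d+i))"
    using assms by (rule ptrace2_idx)
  also have "\<dots> = (\<Sum>i<d. v $ (r*d+i) * cnj (v $ (s*d+i)))"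
  proof (rule sum.cong[OF refl])
    fix i assume "i \<in> {..<d}"
    hence i: "i < d" by simp
    have "r*d+i < d*d" "s*d+i < d*d" using mult_idx_lt[OF assms(1) i] mult_idx_lt[OF assms(2) i] by auto
    thus "outer (d*d) v $$ (r*d+i, s*d+i) = v $ (r*d+i) * cnj (v $ (s*d+i))" by (simp add: outer_idx)
  qed
  finally show ?thesis .
qed

lemma sig3_form: assumes dc: "\<forall>k<K. \<delta> k \<in> carrier_mat (b k) (b k)" and bp: "\<forall>k<K. 0 < b k"
  and d: "d = off a b K"
  shows "sf (d*d) (ent (kron (ptrace2 d d (outer (d*d) v)) (sigc K a b \<delta> cc))) w w
    = (\<Sum>k<K. complex_of_real (cc k) * (\<Sum>x<a k. \<Sum>i<d. sf (b k) (ent (\<delta> k)) (Hf v w d a b k i x) (Hf v w d a b k i x)))"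
proof -
  let ?A = "\<lambda>r s i. v $ (r*d+i) * cnj (v $ (s*d+i))"
  let ?S = "\<lambda>r s k x. sf (b k) (ent (\<delta> k)) (Ub a b (\<lambda>j. w (r*d+j)) k x) (Ub a b (\<lambda>j. w (s*d+j)) k x)"
  let ?C = "\<lambda>k. complex_of_real (cc k)"
  have c1: "ptrace2 d d (outer (d*d) v) \<in> carrier_mat d d" by (simp add: ptrace2_def)
  have c2: "sigc K a b \<delta> cc \<in> carrier_mat d d" by (rule carrier_matI) (simp_all add: sigc_def d)
  have "sf (d*d) (ent (kron (ptrace2 d d (outer (d*d) v)) (sigc K a b \<delta> cc))) w w
     = (\<Sum>r<d. \<Sum>s<d. ptrace2 d d (outer (d*d) v) $$ (r,s) * sf d (ent (sigc K a b \<delta> cc)) (\<lambda>i. w (r*d+i)) (\<lambda>i. w (s*d+i)))"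
    by (rule kron_sf[OF c1 c2])
  also have "\<dots> = (\<Sum>r<d. \<Sum>s<d. (\<Sum>i<d. ?A r s i) * (\<Sum>k<K. ?C k * (\<Sum>x<a k. ?S r s k x)))"
    by (intro sum.cong refl) (simp add: ptrace2_pure d sigc_sf[OF dc bp] Ub_def)
  also have "\<dots> = (\<Sum>r<d. \<Sum>s<d. \<Sum>k<K. \<Sum>x<a k. \<Sum>i<d. ?C k * (?A r s i * ?S r s k x))"
    by (simp add: sum_distrib_left sum_distrib_right mult_ac)
  also have "\<dots> = (\<Sum>k<K. \<Sum>r<d. \<Sum>s<d. \<Sum>x<a k. \<Sum>i<d. ?C k * (?A r s i * ?S r s k x))"
    by (simp only: sum.swap[where B="{..<K}"])
  also have "\<dots> = (\<Sum>k<K. ?C k * (\<Sum>x<a k. \<Sum>i<d. \<Sum>r<d. \<Sum>s<d. ?A r s i * ?S r s k x))"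
  proof (rule sum.cong[OF refl])
    fix k
    have "(\<Sum>r<d. \<Sum>s<d. \<Sum>x<a k. \<Sum>i<d. ?C k * (?A r s i * ?S r s k x))
       = (\<Sum>x<a k. \<Sum>r<d. \<Sum>s<d. \<Sum>i<d. ?C k * (?A r s i * ?S r s k x))"
      by (simp only: sum.swap[where B="{..<a k}"])
    also have "\<dots> = (\<Sum>x<a k. \<Sum>r<d. \<Sum>i<d. \<Sum>s<d. ?C k * (?A r s i * ?S r s k x))"
      by (rule sum.cong[OF refl], rule sum.cong[OF refl], rule sum.swap)
    also have "\<dots> = (\<Sum>x<a k. \<Sum>i<d. \<Sum>r<d. \<Sum>s<d. ?C k * (?A r s i * ?S r s k x))"
      by (rule sum.cong[OF refl]) (rule sum.swap)
    also have "\<dots> = ?C k * (\<Sum>x<a k. \<Sum>i<d. \<Sum>r<d. \<Sum>s<d. ?A r s i * ?S r s k x)"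
      by (simp add: sum_distrib_left)
    finally show "(\<Sum>r<d. \<Sum>s<d. \<Sum>x<a k. \<Sum>i<d. ?C k * (?A r s i * ?S r s k x))
       = ?C k * (\<Sum>x<a k. \<Sum>i<d. \<Sum>r<d. \<Sum>s<d. ?A r s i * ?S r s k x)" .
  qed
  also have "\<dots> = (\<Sum>k<K. complex_of_real (cc k) * (\<Sum>x<a k. \<Sum>i<d. sf (b k) (ent (\<delta> k)) (Hf v w d a b k i x) (Hf v w d a b k i x)))"
    unfolding sf_Hf by (simp add: mult.assoc)
  finally show ?thesis .
qed


lemma claim3_pt: assumes A: "\<forall>k<K. \<delta> k \<in> states (b k) \<and> pd (b k) (\<delta> k)"
  and d: "d = off a b K" and \<psi>: "\<psi> \<in> pure_states (d*d)"
  shows "(INF \<sigma>\<in>states d. Dmax (id_tensor d d (blockP K a b \<delta>) \<psi>) (kron (ptrace2 d d \<psi>) \<sigma>))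
     \<le> ereal (log 2 (\<Sum>k<K. (real (a k))\<^sup>2))"
proof -
  obtain v where v: "\<psi> = outer (d*d) v" "v \<in> carrier_vec (d*d)" "(\<Sum>i<d*d. (cmod (v $ i))\<^sup>2) = 1"
    using pure_state_obtain[OF \<psi>] by blast
  note DF = delta_facts[OF A]
  have dpos: "0 < off a b K" using v(3) d by (cases "off a b K") auto
  define S2 where "S2 = (\<Sum>k<K. (real (a k))\<^sup>2)"
  obtain k0 where k0: "k0 < K" "0 < a k0" using dpos_exists[OF dpos] by blast
  have S2pos: "0 < S2" unfolding S2_def by (rule sum_pos2[of _ k0]) (use k0 in auto)
  define cc where "cc k = real (a k) / S2" for k
  define \<sigma> where "\<sigma> = sigc K a b \<delta> cc"
  have cc0: "\<forall>k<K. 0 \<le> cc k" unfolding cc_def using S2pos by simp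
  have "(\<Sum>k<K. real (a k) * cc k) = (\<Sum>k<K. (real (a k))\<^sup>2) / S2"
    unfolding cc_def by (simp add: sum_divide_distrib power2_eq_square)
  hence sum1: "(\<Sum>k<K. real (a k) * cc k) = 1" unfolding S2_def[symmetric] using S2pos by simp
  have "\<sigma> \<in> states (off a b K)" unfolding \<sigma>_def
    by (rule sigc_states) (use A DF(4) cc0 sum1 in auto)
  hence \<sigma>S: "\<sigma> \<in> states d" using d by simp
  let ?T = "id_tensor d d (blockP K a b \<delta>) \<psi>"
  let ?s = "\<lambda>k u. sf (b k) (ent (\<delta> k)) u u"
  have dimT: "dim_row ?T = d*d" by (simp add: id_tensor_def)
  have sig_form: "sf (d*d) (ent (kron (ptrace2 d d \<psi>) \<sigma>)) w w
      = (\<Sum>k<K. complex_of_real (cc k) * (\<Sum>x<a k. \<Sum>i<d. ?s k (Hf v w d a b k i x)))" for w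
    unfolding v(1) \<sigma>_def by (rule sig3_form[OF DF(1) DF(4) d])
  have rho_form: "sf (d*d) (ent ?T) w w = (\<Sum>k<K. \<Sum>l<b k. ?s k (Zf v w d a b k l))" for w
    unfolding v(1) by (rule pure_T[OF DF(1) d])
  have psdk: "\<And>k. k<K \<Longrightarrow> psdf (b k) (ent (\<delta> k))" using DF(5) by blast
  have "psd (dim_row ?T) (mat (dim_row ?T) (dim_row ?T) (\<lambda>(i,j). complex_of_real S2 * kron (ptrace2 d d \<psi>) \<sigma> $$ (i,j) - ?T $$ (i,j)))"
  proof (rule psd_diff[OF dimT])
    fix w
    show "Im (sf (d*d) (ent (kron (ptrace2 d d \<psi>) \<sigma>)) w w) = 0"
      unfolding sig_form Im_sum using psdk psdf_def by (simp add: Im_sum)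
    show "Im (sf (d*d) (ent ?T) w w) = 0"
      unfolding rho_form Im_sum using psdk psdf_def by simp
    have "Re (sf (d*d) (ent ?T) w w) = (\<Sum>k<K. \<Sum>l<b k. Re (?s k (Zf v w d a b k l)))"
      unfolding rho_form Re_sum ..
    also have "\<dots> \<le> (\<Sum>k<K. S2 * cc k * (\<Sum>x<a k. \<Sum>i<d. Re (?s k (Hf v w d a b k i x))))"
    proof (rule sum_mono)
      fix k assume "k \<in> {..<K}"
      hence k: "k < K" by simp
      have "(\<Sum>l<b k. Re (?s k (Zf v w d a b k l)))
         \<le> (\<Sum>l<b k. real (a k) * (\<Sum>x<a k. Re (?s k (Gf v w d a b k x l x))))"
        by (rule sum_mono) (rule Z_sumCS[where v=v and w=w and d=d and a=a and b=b and k=k, OF psdk[OF k]])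
      also have "\<dots> = real (a k) * (\<Sum>l<b k. \<Sum>x<a k. Re (?s k (Gf v w d a b k x l x)))"
        by (simp add: sum_distrib_left)
      also have "\<dots> \<le> real (a k) * (\<Sum>x<a k. \<Sum>i<d. Re (?s k (Hf v w d a b k i x)))"
        by (rule mult_left_mono[OF G_to_H[OF DF(5) k d]]) simp
      also have "real (a k) = S2 * cc k" unfolding cc_def using S2pos by simp
      finally show "(\<Sum>l<b k. Re (?s k (Zf v w d a b k l))) \<le> S2 * cc k * (\<Sum>x<a k. \<Sum>i<d. Re (?s k (Hf v w d a b k i x)))" .
    qed
    also have "\<dots> = S2 * Re (sf (d*d) (ent (kron (ptrace2 d d \<psi>) \<sigma>)) w w)"
      unfolding sig_form Re_sum by (simp add: sum_distrib_left mult_ac)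
    finally show "Re (sf (d*d) (ent ?T) w w) \<le> S2 * Re (sf (d*d) (ent (kron (ptrace2 d d \<psi>) \<sigma>)) w w)" .
  qed
  hence "Dmax ?T (kron (ptrace2 d d \<psi>) \<sigma>) \<le> ereal (log 2 S2)" by (rule Dmax_le[OF S2pos])
  thus ?thesis unfolding S2_def by (rule INF_lower2[OF \<sigma>S])
qed




lemma mcnj: "z * cnj z = (complex_of_real (cmod z))\<^sup>2"
  by (metis complex_norm_square of_real_power)

lemma ketbra_dg: "ketbra d j = dg d (\<lambda>i. if i = j then 1 else 0)"
  unfolding ketbra_def dg_def by (rule cong[of "mat d d", OF refl]) (auto simp: fun_eq_iff)

lemma dg_sf: "sf n (ent (dg n z)) u u = complex_of_real (\<Sum>i<n. z i * (cmod (u i))\<^sup>2)"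
proof -
  have "sf n (ent (dg n z)) u u = (\<Sum>i<n. \<Sum>j<n. if i = j then cnj (u i) * complex_of_real (z i) * u j else 0)"
    unfolding sf_def ent_def dg_def by (intro sum.cong refl) auto
  also have "\<dots> = (\<Sum>i<n. complex_of_real (z i) * (cnj (u i) * u i))"
    by (simp add: mult_ac)
  also have "\<dots> = complex_of_real (\<Sum>i<n. z i * (cmod (u i))\<^sup>2)"
  proof -
    have "cnj (u i) * u i = complex_of_real ((cmod (u i))\<^sup>2)" for i
      by (metis complex_norm_square mult.commute of_real_power)
    thus ?thesis unfolding of_real_sum by simp
  qed
  finally show ?thesis .
qed

lemma dg_tr: "tr (dg n z) = complex_of_real (\<Sum>i<n. z i)"
  unfolding tr_def dg_def by simp

lemma dg_states: assumes "\<forall>i<n. 0 \<le> z i" "(\<Sum>i<n. z i) = 1" shows "dg n z \<in> states n"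
proof -
  have "psd n (dg n z)"
  proof (rule psdI)
    show "dg n z \<in> carrier_mat n n" by (simp add: dg_def)
    show "psdf n (ent (dg n z))" unfolding psdf_def dg_sf using assms(1)
      by (auto intro!: sum_nonneg)
  qed
  thus ?thesis unfolding states_def using assms(2) by (simp add: dg_tr)
qed

lemma if_mult0: "(if P then a else (0::complex)) * b = (if P then a * b else 0)" by simp

lemma P_dg_sf: assumes dc: "\<forall>k<K. \<delta> k \<in> carrier_mat (b k) (b k)" and d: "d = off a b K"
  shows "sf d (ent (blockP K a b \<delta> (dg d z))) u u'
    = (\<Sum>k<K. \<Sum>x<a k. complex_of_real (\<Sum>l<b k. z (off a b k + x * b k + l)) * sf (b k) (ent (\<delta> k)) (Ub a b u k x) (Ub a b u' k x))"
  unfolding d P_sf[OF dc]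
proof (rule sum.cong[OF refl])
  fix k assume "k \<in> {..<K}"
  hence k: "k < K" by simp
  show "(\<Sum>x<a k. \<Sum>y<a k. ptrf a b k (ent (dg (off a b K) z)) x y * sf (b k) (ent (\<delta> k)) (Ub a b u k x) (Ub a b u' k y))
    = (\<Sum>x<a k. complex_of_real (\<Sum>l<b k. z (off a b k + x * b k + l)) * sf (b k) (ent (\<delta> k)) (Ub a b u k x) (Ub a b u' k x))"
    by (simp add: ptrf_dg[where K=K and a=a and b=b, OF k] if_mult0)
qed

lemma P_dg_tr: assumes dc: "\<forall>k<K. \<delta> k \<in> carrier_mat (b k) (b k)" and dt: "\<forall>k<K. tr (\<delta> k) = 1"
  and d: "d = off a b K"
  shows "tr (blockP K a b \<delta> (dg d z)) = complex_of_real (\<Sum>i<d. z i)"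
proof -
  have "tr (blockP K a b \<delta> (dg d z)) = (\<Sum>k<K. \<Sum>x<a k. complex_of_real (\<Sum>l<b k. z (off a b k + x * b k + l)))"
    unfolding P_tr[OF dc dt] d by (intro sum.cong refl) (simp add: ptrf_dg)
  also have "\<dots> = complex_of_real (\<Sum>i<d. z i)" unfolding d full_sum of_real_sum ..
  finally show ?thesis .
qed

lemma P_dg_states: assumes A: "\<forall>k<K. \<delta> k \<in> states (b k) \<and> pd (b k) (\<delta> k)" and d: "d = off a b K"
  and z: "\<forall>i<d. 0 \<le> z i" "(\<Sum>i<d. z i) = 1"
  shows "blockP K a b \<delta> (dg d z) \<in> states d"
proof -
  note DF = delta_facts[OF A]
  have "psd d (blockP K a b \<delta> (dg d z))"
  proof (rule psdI)
    show "blockP K a b \<delta> (dg d z) \<in> carrier_mat d d" by (rule carrier_matI) (simp_all add: d)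
    show "psdf d (ent (blockP K a b \<delta> (dg d z)))"
      unfolding psdf_def
    proof
      fix u
      define X where "X k x = complex_of_real (\<Sum>l<b k. z (off a b k + x * b k + l)) * sf (b k) (ent (\<delta> k)) (Ub a b u k x) (Ub a b u k x)" for k x
      have H: "Im (X k x) = 0 \<and> 0 \<le> Re (X k x)" if "k < K" "x < a k" for k x
      proof -
        have "0 \<le> (\<Sum>l<b k. z (off a b k + x * b k + l))"
          by (intro sum_nonneg) (use z(1) idx_lt(2)[where K=K and a=a and b=b, OF that] d in auto)
        moreover have "psdf (b k) (ent (\<delta> k))" using DF(5) that by blast
        ultimately show ?thesis unfolding X_def psdf_def by simp
      qed
      have "sf d (ent (blockP K a b \<delta> (dg d z))) u u = (\<Sum>k<K. \<Sum>x<a k. X k x)"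
        unfolding X_def by (rule P_dg_sf[OF DF(1) d])
      moreover have "Im (\<Sum>k<K. \<Sum>x<a k. X k x) = 0" unfolding Im_sum by (intro sum.neutral ballI) (use H in auto)
      moreover have "0 \<le> Re (\<Sum>k<K. \<Sum>x<a k. X k x)" unfolding Re_sum by (intro sum_nonneg) (use H in auto)
      ultimately show "Im (sf d (ent (blockP K a b \<delta> (dg d z))) u u) = 0 \<and> 0 \<le> Re (sf d (ent (blockP K a b \<delta> (dg d z))) u u)"
        by simp
    qed
  qed
  moreover have "tr (blockP K a b \<delta> (dg d z)) = 1" unfolding P_dg_tr[OF DF(1) DF(2) d] z(2) by simp
  ultimately show ?thesis unfolding states_def by simp
qed

lemma r1_sf: "sf n (ent (mat n n (\<lambda>(r,s). \<alpha> r * cnj (\<alpha> s) / complex_of_real c))) u u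
   = complex_of_real ((cmod (\<Sum>r<n. cnj (u r) * \<alpha> r))\<^sup>2 / c)"
proof -
  define z where "z = (\<Sum>r<n. cnj (u r) * \<alpha> r)"
  have "sf n (ent (mat n n (\<lambda>(r,s). \<alpha> r * cnj (\<alpha> s) / complex_of_real c))) u u
     = sf n (\<lambda>r s. \<alpha> r * cnj (\<alpha> s) / complex_of_real c) u u"
    by (rule sf_cong_M) (simp add: ent_def)
  also have "\<dots> = z * cnj z / complex_of_real c"
    unfolding sf_def z_def by (simp add: sum_distrib_left sum_distrib_right sum_divide_distrib mult_ac) (rule sum.swap)
  also have "\<dots> = complex_of_real ((cmod z)\<^sup>2 / c)" by (simp add: mcnj)
  finally show ?thesis unfolding z_def .
qed

lemma r1_states: assumes c: "c = (\<Sum>r<n. (cmod (\<alpha> r))\<^sup>2)" "c \<noteq> 0"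
  shows "mat n n (\<lambda>(r,s). \<alpha> r * cnj (\<alpha> s) / complex_of_real c) \<in> states n"
proof -
  have c0: "0 < c" using c by (metis (no_types, lifting) sum_nonneg zero_le_power2 order_le_less)
  have "psd n (mat n n (\<lambda>(r,s). \<alpha> r * cnj (\<alpha> s) / complex_of_real c))"
    by (rule psdI) (use c0 in \<open>auto simp: psdf_def r1_sf\<close>)
  moreover have "tr (mat n n (\<lambda>(r,s). \<alpha> r * cnj (\<alpha> s) / complex_of_real c)) = 1"
  proof -
    have "tr (mat n n (\<lambda>(r,s). \<alpha> r * cnj (\<alpha> s) / complex_of_real c)) = (\<Sum>r<n. \<alpha> r * cnj (\<alpha> r)) / complex_of_real c"
      unfolding tr_def by (simp add: sum_divide_distrib)
    also have "(\<Sum>r<n. \<alpha> r * cnj (\<alpha> r)) = complex_of_real c"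
      unfolding c(1) of_real_sum by (intro sum.cong refl) (simp add: mcnj)
    finally show ?thesis using c0 by simp
  qed
  ultimately show ?thesis unfolding states_def by simp
qed




lemma sum_pick: "(\<Sum>j<(d::nat). if e = j then h j else (0::complex)) = (if e < d then h e else 0)"
  by (induct d) auto

lemma sum_ind_pick:
  shows "(\<Sum>j<(d::nat). complex_of_real (\<Sum>l<B. if f l = j then 1 else 0) * g j) = (\<Sum>l<B. if f l < d then g (f l) else 0)"
proof -
  have "(\<Sum>j<d. complex_of_real (\<Sum>l<B. if f l = j then 1 else 0) * g j) = (\<Sum>j<d. \<Sum>l<B. if f l = j then g j else 0)"
    by (simp only: of_real_sum sum_distrib_right) (intro sum.cong refl, auto)
  also have "\<dots> = (\<Sum>l<B. \<Sum>j<d. if f l = j then g j else 0)" by (rule sum.swap)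
  also have "\<dots> = (\<Sum>l<B. if f l < d then g (f l) else 0)"
    by (rule sum.cong[OF refl]) (rule sum_pick)
  finally show ?thesis .
qed

lemma sig4_form: assumes dc: "\<forall>k<K. \<delta> k \<in> carrier_mat (b k) (b k)"
  and d: "d = off a b K"
  and cj: "\<And>j. cj j = (\<Sum>r<d. (cmod (v $ (r*d+j)))\<^sup>2)"
  and rs: "\<And>j. rs j = (if cj j = 0 then ketbra d 0 else mat d d (\<lambda>(r,s). v $ (r*d+j) * cnj (v $ (s*d+j)) / complex_of_real (cj j)))"
  and ss: "\<And>j. ss j = blockP K a b \<delta> (ketbra d j)"
  shows "sf (d*d) (ent (mat (d*d) (d*d) (\<lambda>(x,y). \<Sum>j<d. complex_of_real (cj j) * kron (rs j) (ss j) $$ (x,y)))) w w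
    = (\<Sum>k<K. \<Sum>x<a k. \<Sum>l<b k. sf (b k) (ent (\<delta> k)) (Gf v w d a b k x l x) (Gf v w d a b k x l x))"
proof -
  let ?A = "\<lambda>j r s. v $ (r*d+j) * cnj (v $ (s*d+j))"
  let ?S = "\<lambda>r s k x. sf (b k) (ent (\<delta> k)) (Ub a b (\<lambda>i. w (r*d+i)) k x) (Ub a b (\<lambda>i. w (s*d+i)) k x)"
  let ?N = "\<lambda>j k x. complex_of_real (\<Sum>l<b k. if off a b k + x * b k + l = j then 1 else 0)"
  have rsc: "rs j \<in> carrier_mat d d" for j unfolding rs by (simp add: ketbra_def)
  have ssc: "ss j \<in> carrier_mat d d" for j unfolding ss by (rule carrier_matI) (simp_all add: d)
  have crs: "complex_of_real (cj j) * rs j $$ (r,s) = ?A j r s" if "r < d" "s < d" for j r s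
  proof (cases "cj j = 0")
    case True
    hence "\<forall>r<d. v $ (r*d+j) = 0" unfolding cj by (simp add: sum_nonneg_eq_0_iff)
    thus ?thesis using True that by simp
  next
    case False thus ?thesis using that unfolding rs by simp
  qed
  have ssf: "sf d (ent (ss j)) u u' = (\<Sum>k<K. \<Sum>x<a k. ?N j k x * sf (b k) (ent (\<delta> k)) (Ub a b u k x) (Ub a b u' k x))" for j u u'
    unfolding ss ketbra_dg by (rule P_dg_sf[OF dc d])
  have "sf (d*d) (ent (mat (d*d) (d*d) (\<lambda>(x,y). \<Sum>j<d. complex_of_real (cj j) * kron (rs j) (ss j) $$ (x,y)))) w w
     = sf (d*d) (\<lambda>x y. \<Sum>j<d. complex_of_real (cj j) * ent (kron (rs j) (ss j)) x y) w w"
    by (rule sf_cong_M) (simp add: ent_def)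
  also have "\<dots> = (\<Sum>j<d. complex_of_real (cj j) * sf (d*d) (ent (kron (rs j) (ss j))) w w)"
    by (simp add: sf_sum_mat sf_scale_mat)
  also have "\<dots> = (\<Sum>j<d. \<Sum>r<d. \<Sum>s<d. ?A j r s * sf d (ent (ss j)) (\<lambda>i. w (r*d+i)) (\<lambda>i. w (s*d+i)))"
  proof (rule sum.cong[OF refl])
    fix j
    show "complex_of_real (cj j) * sf (d*d) (ent (kron (rs j) (ss j))) w w
      = (\<Sum>r<d. \<Sum>s<d. ?A j r s * sf d (ent (ss j)) (\<lambda>i. w (r*d+i)) (\<lambda>i. w (s*d+i)))"
      unfolding kron_sf[OF rsc ssc] sum_distrib_left
      by (intro sum.cong refl) (simp add: mult.assoc[symmetric] crs)
  qed
  also have "\<dots> = (\<Sum>j<d. \<Sum>k<K. \<Sum>x<a k. ?N j k x * sf (b k) (ent (\<delta> k)) (Hf v w d a b k j x) (Hf v w d a b k j x))"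
  proof (rule sum.cong[OF refl])
    fix j
    have "(\<Sum>r<d. \<Sum>s<d. ?A j r s * sf d (ent (ss j)) (\<lambda>i. w (r*d+i)) (\<lambda>i. w (s*d+i)))
       = (\<Sum>r<d. \<Sum>s<d. \<Sum>k<K. \<Sum>x<a k. ?N j k x * (?A j r s * ?S r s k x))"
      unfolding ssf by (simp add: sum_distrib_left Ub_def mult_ac)
    also have "\<dots> = (\<Sum>k<K. \<Sum>r<d. \<Sum>s<d. \<Sum>x<a k. ?N j k x * (?A j r s * ?S r s k x))"
      by (simp only: sum.swap[where B="{..<K}"])
    also have "\<dots> = (\<Sum>k<K. \<Sum>x<a k. ?N j k x * (\<Sum>r<d. \<Sum>s<d. ?A j r s * ?S r s k x))"
    proof (rule sum.cong[OF refl])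
      fix k
      show "(\<Sum>r<d. \<Sum>s<d. \<Sum>x<a k. ?N j k x * (?A j r s * ?S r s k x))
          = (\<Sum>x<a k. ?N j k x * (\<Sum>r<d. \<Sum>s<d. ?A j r s * ?S r s k x))"
        by (simp only: sum.swap[where B="{..<a k}"]) (simp add: sum_distrib_left)
    qed
    also have "\<dots> = (\<Sum>k<K. \<Sum>x<a k. ?N j k x * sf (b k) (ent (\<delta> k)) (Hf v w d a b k j x) (Hf v w d a b k j x))"
      unfolding sf_Hf Ub_def ..
    finally show "(\<Sum>r<d. \<Sum>s<d. ?A j r s * sf d (ent (ss j)) (\<lambda>i. w (r*d+i)) (\<lambda>i. w (s*d+i)))
       = (\<Sum>k<K. \<Sum>x<a k. ?N j k x * sf (b k) (ent (\<delta> k)) (Hf v w d a b k j x) (Hf v w d a b k j x))" .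
  qed
  also have "\<dots> = (\<Sum>k<K. \<Sum>j<d. \<Sum>x<a k. ?N j k x * sf (b k) (ent (\<delta> k)) (Hf v w d a b k j x) (Hf v w d a b k j x))"
    by (rule sum.swap)
  also have "\<dots> = (\<Sum>k<K. \<Sum>x<a k. \<Sum>j<d. ?N j k x * sf (b k) (ent (\<delta> k)) (Hf v w d a b k j x) (Hf v w d a b k j x))"
    by (rule sum.cong[OF refl], rule sum.swap)
  also have "\<dots> = (\<Sum>k<K. \<Sum>x<a k. \<Sum>l<b k. sf (b k) (ent (\<delta> k)) (Gf v w d a b k x l x) (Gf v w d a b k x l x))"
  proof (rule sum.cong[OF refl], rule sum.cong[OF refl])
    fix k x assume k: "k \<in> {..<K}" and x: "x \<in> {..<a k}"
    have "(\<Sum>j<d. ?N j k x * sf (b k) (ent (\<delta> k)) (Hf v w d a b k j x) (Hf v w d a b k j x))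
      = (\<Sum>l<b k. if off a b k + x * b k + l < d then sf (b k) (ent (\<delta> k)) (Hf v w d a b k (off a b k + x * b k + l) x) (Hf v w d a b k (off a b k + x * b k + l) x) else 0)"
      by (rule sum_ind_pick)
    also have "\<dots> = (\<Sum>l<b k. sf (b k) (ent (\<delta> k)) (Gf v w d a b k x l x) (Gf v w d a b k x l x))"
      by (rule sum.cong[OF refl]) (use k x idx_lt(2)[where K=K and a=a and b=b] d in \<open>auto simp: Gf_Hf\<close>)
    finally show "(\<Sum>j<d. ?N j k x * sf (b k) (ent (\<delta> k)) (Hf v w d a b k j x) (Hf v w d a b k j x))
      = (\<Sum>l<b k. sf (b k) (ent (\<delta> k)) (Gf v w d a b k x l x) (Gf v w d a b k x l x))" .
  qed
  finally show ?thesis .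
qed


lemma claim4_pt: assumes A: "\<forall>k<K. \<delta> k \<in> states (b k) \<and> pd (b k) (\<delta> k)"
  and d: "d = off a b K" and \<psi>: "\<psi> \<in> pure_states (d*d)"
  shows "(INF \<sigma>\<in>sep_states d d. Dmax (id_tensor d d (blockP K a b \<delta>) \<psi>) \<sigma>)
     \<le> ereal (log 2 (real (Max (a ` {..<K}))))"
proof -
  obtain v where v: "\<psi> = outer (d*d) v" "v \<in> carrier_vec (d*d)" "(\<Sum>i<d*d. (cmod (v $ i))\<^sup>2) = 1"
    using pure_state_obtain[OF \<psi>] by blast
  note DF = delta_facts[OF A]
  have dpos: "0 < off a b K" using v(3) d by (cases "off a b K") auto
  hence d0: "0 < d" using d by simp
  define c where "c = real (Max (a ` {..<K}))"
  have c0: "0 < c" and ca: "\<And>k. k<K \<Longrightarrow> real (a k) \<le> c" using Max_facts[OF dpos] unfolding c_def by auto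
  define cj where "cj j = (\<Sum>r<d. (cmod (v $ (r*d+j)))\<^sup>2)" for j
  define rs where "rs j = (if cj j = 0 then ketbra d 0 else mat d d (\<lambda>(r,s). v $ (r*d+j) * cnj (v $ (s*d+j)) / complex_of_real (cj j)))" for j
  define ss where "ss j = blockP K a b \<delta> (ketbra d j)" for j
  define \<sigma> where "\<sigma> = mat (d*d) (d*d) (\<lambda>(x,y). \<Sum>j<d. complex_of_real (cj j) * kron (rs j) (ss j) $$ (x,y))"
  have rsS: "rs j \<in> states d" for j
  proof (cases "cj j = 0")
    case True
    have "dg d (\<lambda>i. if i = 0 then 1 else 0) \<in> states d" by (rule dg_states) (use d0 in auto)
    thus ?thesis using True unfolding rs_def ketbra_dg by simp
  next
    case False
    thus ?thesis unfolding rs_def using r1_states[where c="cj j" and n=d and \<alpha>="\<lambda>r. v $ (r*d+j)"] cj_def by simp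
  qed
  have ssS: "ss j \<in> states d" if "j < d" for j
    unfolding ss_def ketbra_dg by (rule P_dg_states[OF A d]) (use that in auto)
  have cjsum: "(\<Sum>j<d. cj j) = 1"
  proof -
    have "(\<Sum>j<d. cj j) = (\<Sum>r<d. \<Sum>j<d. (cmod (v $ (r*d+j)))\<^sup>2)" unfolding cj_def by (rule sum.swap)
    also have "\<dots> = 1" using v(3) by (simp add: sum_prod_idx)
    finally show ?thesis .
  qed
  have \<sigma>S: "\<sigma> \<in> sep_states d d"
    unfolding sep_states_def \<sigma>_def
    by (rule CollectI, rule exI[of _ d], rule exI[of _ cj], rule exI[of _ rs], rule exI[of _ ss])
       (use rsS ssS cjsum in \<open>auto simp: cj_def intro: sum_nonneg\<close>)
  let ?T = "id_tensor d d (blockP K a b \<delta>) \<psi>"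
  let ?s = "\<lambda>k u. sf (b k) (ent (\<delta> k)) u u"
  have dimT: "dim_row ?T = d*d" by (simp add: id_tensor_def)
  have sig_form: "sf (d*d) (ent \<sigma>) w w = (\<Sum>k<K. \<Sum>x<a k. \<Sum>l<b k. ?s k (Gf v w d a b k x l x))" for w
    unfolding \<sigma>_def by (rule sig4_form[OF DF(1) d cj_def rs_def ss_def])
  have rho_form: "sf (d*d) (ent ?T) w w = (\<Sum>k<K. \<Sum>l<b k. ?s k (Zf v w d a b k l))" for w
    unfolding v(1) by (rule pure_T[OF DF(1) d])
  have psdk: "\<And>k. k<K \<Longrightarrow> psdf (b k) (ent (\<delta> k))" using DF(5) by blast
  have "psd (dim_row ?T) (mat (dim_row ?T) (dim_row ?T) (\<lambda>(i,j). complex_of_real c * \<sigma> $$ (i,j) - ?T $$ (i,j)))"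
  proof (rule psd_diff[OF dimT])
    fix w
    show "Im (sf (d*d) (ent \<sigma>) w w) = 0"
      unfolding sig_form Im_sum using psdk psdf_def by simp
    show "Im (sf (d*d) (ent ?T) w w) = 0"
      unfolding rho_form Im_sum using psdk psdf_def by simp
    have "Re (sf (d*d) (ent ?T) w w) = (\<Sum>k<K. \<Sum>l<b k. Re (?s k (Zf v w d a b k l)))"
      unfolding rho_form Re_sum ..
    also have "\<dots> \<le> (\<Sum>k<K. \<Sum>l<b k. c * (\<Sum>x<a k. Re (?s k (Gf v w d a b k x l x))))"
    proof (intro sum_mono)
      fix k l assume "k \<in> {..<K}"
      hence k: "k < K" by simp
      have N: "0 \<le> (\<Sum>x<a k. Re (?s k (Gf v w d a b k x l x)))"
        by (intro sum_nonneg) (use psdf_nonneg[OF psdk[OF k]] in auto)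
      have "Re (?s k (Zf v w d a b k l)) \<le> real (a k) * (\<Sum>x<a k. Re (?s k (Gf v w d a b k x l x)))"
        by (rule Z_sumCS[where v=v and w=w and d=d and a=a and b=b and k=k, OF psdk[OF k]])
      also have "\<dots> \<le> c * (\<Sum>x<a k. Re (?s k (Gf v w d a b k x l x)))"
        by (rule mult_right_mono[OF ca[OF k] N])
      finally show "Re (?s k (Zf v w d a b k l)) \<le> c * (\<Sum>x<a k. Re (?s k (Gf v w d a b k x l x)))" .
    qed
    also have "\<dots> = c * (\<Sum>k<K. \<Sum>l<b k. \<Sum>x<a k. Re (?s k (Gf v w d a b k x l x)))"
      by (simp add: sum_distrib_left)
    also have "(\<Sum>k<K. \<Sum>l<b k. \<Sum>x<a k. Re (?s k (Gf v w d a b k x l x))) = Re (sf (d*d) (ent \<sigma>) w w)"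
      unfolding sig_form Re_sum by (rule sum.cong[OF refl]) (rule sum.swap)
    finally show "Re (sf (d*d) (ent ?T) w w) \<le> c * Re (sf (d*d) (ent \<sigma>) w w)" .
  qed
  hence "Dmax ?T \<sigma> \<le> ereal (log 2 c)" by (rule Dmax_le[OF c0])
  thus ?thesis unfolding c_def[symmetric] by (rule INF_lower2[OF \<sigma>S])
qed




lemma ptrf_psdf: assumes X: "psdf d (ent X)" and k: "k < K" and d: "d = off a b K"
  shows "psdf (a k) (ptrf a b k (ent X))"
  unfolding psdf_def
proof
  fix u :: "nat \<Rightarrow> complex"
  let ?e = "\<lambda>x l. off a b k + x * b k + l"
  define ut where "ut l = (\<lambda>i. \<Sum>x<a k. u x * (if i = ?e x l then 1 else 0))" for l
  have lt: "?e x l < d" if "x < a k" "l < b k" for x l using idx_lt(2)[where K=K and a=a and b=b, OF k that] d by simp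
  have "sf (a k) (ptrf a b k (ent X)) u u = (\<Sum>l<b k. sf d (ent X) (ut l) (ut l))"
  proof -
    have "sf (a k) (ptrf a b k (ent X)) u u = (\<Sum>x<a k. \<Sum>y<a k. \<Sum>l<b k. cnj (u x) * u y * ent X (?e x l) (?e y l))"
      unfolding sf_def ptrf_def by (simp add: sum_distrib_left sum_distrib_right mult_ac)
    also have "\<dots> = (\<Sum>l<b k. \<Sum>x<a k. \<Sum>y<a k. cnj (u x) * u y * ent X (?e x l) (?e y l))"
      by (simp only: sum.swap[where B="{..<b k}"])
    also have "\<dots> = (\<Sum>l<b k. sf d (ent X) (ut l) (ut l))"
    proof (rule sum.cong[OF refl])
      fix l assume "l \<in> {..<b k}"
      hence l: "l < b k" by simp
      have "sf d (ent X) (ut l) (ut l) = (\<Sum>x<a k. \<Sum>y<a k. cnj (u x) * u y * sf d (ent X) (\<lambda>i. if i = ?e x l then 1 else 0) (\<lambda>i. if i = ?e y l then 1 else 0))"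
        unfolding ut_def by (simp add: sf_sum_left sf_sum_right sf_scale_left sf_scale_right sum_distrib_left mult.assoc del: if01)
      also have "\<dots> = (\<Sum>x<a k. \<Sum>y<a k. cnj (u x) * u y * ent X (?e x l) (?e y l))"
        by (intro sum.cong refl) (simp add: sf_delta lt l)
      finally show "(\<Sum>x<a k. \<Sum>y<a k. cnj (u x) * u y * ent X (?e x l) (?e y l)) = sf d (ent X) (ut l) (ut l)" ..
    qed
    finally show ?thesis .
  qed
  thus "Im (sf (a k) (ptrf a b k (ent X)) u u) = 0 \<and> 0 \<le> Re (sf (a k) (ptrf a b k (ent X)) u u)"
    using X unfolding psdf_def Im_sum Re_sum by (auto intro: sum_nonneg)
qed

lemma ptrf_trace: assumes d: "d = off a b K" and X: "dim_row X = d"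
  shows "(\<Sum>k<K. \<Sum>x<a k. ptrf a b k (ent X) x x) = tr X"
  unfolding tr_def X d full_sum ptrf_def ent_def ..


lemma states_pos: "X \<in> states n \<Longrightarrow> 0 < n"
  unfolding states_def psd_def by (cases n) (auto simp: tr_def)

lemma cq_obtain: assumes "(nM, \<rho>) \<in> cq_states d"
  obtains p rs where "\<forall>m<nM. 0 \<le> p m \<and> rs m \<in> states d" "(\<Sum>m<nM. p m) = 1"
    "\<rho> = mat (nM * d) (nM * d) (\<lambda>(i, j). \<Sum>m<nM. complex_of_real (p m) * kron (ketbra nM m) (rs m) $$ (i, j))"
  using assms unfolding cq_states_def by blast

lemma mult_if0: "c * (if P then x else (0::complex)) = (if P then c * x else 0)" by simp

lemma cq_idx: assumes rs: "\<forall>m<nM. rs m \<in> carrier_mat d d"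
  and "m1 < nM" "m2 < nM" "i < d" "j < d"
  shows "mat (nM * d) (nM * d) (\<lambda>(i, j). \<Sum>m<nM. complex_of_real (p m) * kron (ketbra nM m) (rs m) $$ (i, j)) $$ (m1*d+i, m2*d+j)
    = (if m1 = m2 then complex_of_real (p m1) * rs m1 $$ (i,j) else 0)"
proof -
  have lt: "m1*d+i < nM*d" "m2*d+j < nM*d" using assms mult_idx_lt by auto
  have "mat (nM * d) (nM * d) (\<lambda>(i, j). \<Sum>m<nM. complex_of_real (p m) * kron (ketbra nM m) (rs m) $$ (i, j)) $$ (m1*d+i, m2*d+j)
      = (\<Sum>m<nM. complex_of_real (p m) * ((if m1 = m \<and> m2 = m then 1 else 0) * rs m $$ (i,j)))"
  proof -
    have "kron (ketbra nM m) (rs m) $$ (m1*d+i, m2*d+j) = (if m1 = m \<and> m2 = m then 1 else 0) * rs m $$ (i,j)" if "m < nM" for m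
    proof -
      have "kron (ketbra nM m) (rs m) $$ (m1*d+i, m2*d+j) = ketbra nM m $$ (m1, m2) * rs m $$ (i,j)"
        by (rule kron_idx) (use assms that in \<open>auto simp: ketbra_def\<close>)
      thus ?thesis using assms by (simp add: ketbra_def)
    qed
    thus ?thesis using lt by simp
  qed
  also have "\<dots> = (if m1 = m2 then complex_of_real (p m1) * rs m1 $$ (i,j) else 0)"
    using assms(2) by (cases "m1 = m2") (auto simp: mult_if0 intro!: sum.neutral)
  finally show ?thesis .
qed


lemma P_state_bound: assumes A: "\<forall>k<K. \<delta> k \<in> states (b k) \<and> pd (b k) (\<delta> k)"
  and d: "d = off a b K" and X: "X \<in> states d"
  shows "Im (sf d (ent (blockP K a b \<delta> X)) u u) = 0"
    "Re (sf d (ent (blockP K a b \<delta> X)) u u) \<le> (\<Sum>k<K. \<Sum>x<a k. Re (sf (b k) (ent (\<delta> k)) (Ub a b u k x) (Ub a b u k x)))"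
proof -
  note DF = delta_facts[OF A]
  let ?\<tau> = "\<lambda>k. ptrf a b k (ent X)"
  let ?G = "\<lambda>k x y. sf (b k) (ent (\<delta> k)) (Ub a b u k x) (Ub a b u k y)"
  have Xp: "psdf d (ent X)" using X unfolding states_def by (auto intro: psd_psdf)
  have Xd: "dim_row X = d" using X unfolding states_def psd_def by auto
  have Xt: "tr X = 1" using X unfolding states_def by auto
  have tp: "psdf (a k) (?\<tau> k)" if "k < K" for k by (rule ptrf_psdf[OF Xp that d])
  have dp: "psdf (b k) (ent (\<delta> k))" if "k < K" for k using DF(5) that by blast
  have sumT: "(\<Sum>k<K. \<Sum>x<a k. Re (?\<tau> k x x)) = 1"
    using arg_cong[OF ptrf_trace[OF d Xd], of Re] Xt unfolding Re_sum by simp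
  have T1: "(\<Sum>x<a k. Re (?\<tau> k x x)) \<le> 1" if k: "k < K" for k
  proof -
    have "(\<Sum>x<a k. Re (?\<tau> k x x)) \<le> (\<Sum>k<K. \<Sum>x<a k. Re (?\<tau> k x x))"
      by (rule member_le_sum[where f="\<lambda>k. \<Sum>x<a k. Re (?\<tau> k x x)"])
         (use k psdf_diag(1)[OF tp] in \<open>auto intro: sum_nonneg\<close>)
    thus ?thesis using sumT by simp
  qed
  have Pe: "sf d (ent (blockP K a b \<delta> X)) u u = (\<Sum>k<K. \<Sum>x<a k. \<Sum>y<a k. ?\<tau> k x y * ?G k x y)"
    unfolding d by (rule P_sf[OF DF(1)])
  show "Im (sf d (ent (blockP K a b \<delta> X)) u u) = 0"
    unfolding Pe Im_sum[of _ "{..<K}"]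
  proof (rule sum.neutral, rule ballI)
    fix k assume "k \<in> {..<K}"
    hence k: "k < K" by simp
    show "Im (\<Sum>x<a k. \<Sum>y<a k. ?\<tau> k x y * ?G k x y) = 0"
    proof (rule herm_prod_real)
      fix x y assume "x < a k" "y < a k"
      thus "?\<tau> k y x = cnj (?\<tau> k x y)" by (rule psdf_herm[OF tp[OF k]])
      show "?G k y x = cnj (?G k x y)" by (rule psdf_sf_swap[OF dp[OF k]])
    qed
  qed
  have "Re (sf d (ent (blockP K a b \<delta> X)) u u) = (\<Sum>k<K. Re (\<Sum>x<a k. \<Sum>y<a k. ?\<tau> k x y * ?G k x y))"
    unfolding Pe Re_sum[of _ "{..<K}"] ..
  also have "\<dots> \<le> (\<Sum>k<K. \<Sum>x<a k. Re (?G k x x))"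
  proof (rule sum_mono)
    fix k assume "k \<in> {..<K}"
    hence k: "k < K" by simp
    have G0: "0 \<le> Re (?G k x x)" for x by (rule psdf_nonneg[OF dp[OF k]])
    have "Re (\<Sum>x<a k. \<Sum>y<a k. ?\<tau> k x y * ?G k x y) \<le> (\<Sum>x<a k. Re (?\<tau> k x x)) * (\<Sum>x<a k. Re (?G k x x))"
      by (rule tauG[OF tp[OF k]]) (auto intro: sf_CS'[OF dp[OF k]] G0)
    also have "\<dots> \<le> 1 * (\<Sum>x<a k. Re (?G k x x))"
      by (rule mult_right_mono[OF T1[OF k]]) (auto intro: sum_nonneg G0)
    finally show "Re (\<Sum>x<a k. \<Sum>y<a k. ?\<tau> k x y * ?G k x y) \<le> (\<Sum>x<a k. Re (?G k x x))" by simp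
  qed
  finally show "Re (sf d (ent (blockP K a b \<delta> X)) u u) \<le> (\<Sum>k<K. \<Sum>x<a k. Re (?G k x x))" .
qed


lemma sum_diag_collapse: "(\<Sum>m1<(n::nat). \<Sum>m2<n. if m1 = m2 then f m1 else (0::complex)) = (\<Sum>m<n. f m)"
  by (rule sum.cong[OF refl]) (simp add: sum_pick[of n])

lemma claim2_pt: assumes A: "\<forall>k<K. \<delta> k \<in> states (b k) \<and> pd (b k) (\<delta> k)"
  and d: "d = off a b K" and h\<rho>: "(nM, \<rho>) \<in> cq_states d"
  shows "(INF \<sigma>\<in>states d. Dmax (id_tensor nM d (blockP K a b \<delta>) \<rho>) (kron (ptrace2 nM d \<rho>) \<sigma>))
     \<le> ereal (log 2 (\<Sum>k<K. real (a k)))"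
proof -
  obtain p rs where H1: "\<forall>m<nM. 0 \<le> p m \<and> rs m \<in> states d" and H2: "(\<Sum>m<nM. p m) = 1"
    and H3: "\<rho> = mat (nM * d) (nM * d) (\<lambda>(i, j). \<Sum>m<nM. complex_of_real (p m) * kron (ketbra nM m) (rs m) $$ (i, j))"
    using cq_obtain[OF h\<rho>] by blast
  note DF = delta_facts[OF A]
  have nM0: "0 < nM" using H2 by (cases nM) auto
  have d0: "0 < d" using H1 nM0 states_pos by blast
  hence dpos: "0 < off a b K" using d by simp
  define S where "S = (\<Sum>k<K. real (a k))"
  obtain k0 where k0: "k0 < K" "0 < a k0" using dpos_exists[OF dpos] by blast
  have S0: "0 < S" unfolding S_def by (rule sum_pos2[of _ k0]) (use k0 in auto)
  define cc where "cc (k::nat) = 1 / S" for k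
  define \<sigma> where "\<sigma> = sigc K a b \<delta> cc"
  have "\<sigma> \<in> states (off a b K)" unfolding \<sigma>_def
  proof (rule sigc_states)
    show "(\<Sum>k<K. real (a k) * cc k) = 1" unfolding cc_def using S0 by (simp add: sum_divide_distrib[symmetric] S_def)
  qed (use A DF(4) S0 in \<open>auto simp: cc_def\<close>)
  hence \<sigma>S: "\<sigma> \<in> states d" using d by simp
  have \<sigma>c: "\<sigma> \<in> carrier_mat d d" using \<sigma>S unfolding states_def psd_def by simp
  have rsc: "\<forall>m<nM. rs m \<in> carrier_mat d d" using H1 unfolding states_def psd_def by auto
  have rst: "tr (rs m) = 1" if "m < nM" for m using H1 that unfolding states_def by auto
  have \<rho>i: "\<rho> $$ (m1*d+i, m2*d+j) = (if m1 = m2 then complex_of_real (p m1) * rs m1 $$ (i,j) else 0)"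
    if "m1 < nM" "m2 < nM" "i < d" "j < d" for m1 m2 i j
    unfolding H3 by (rule cq_idx[OF rsc that])
  let ?\<rho>M = "ptrace2 nM d \<rho>"
  have \<rho>Mc: "?\<rho>M \<in> carrier_mat nM nM" by (simp add: ptrace2_def)
  have \<rho>Mi: "?\<rho>M $$ (m1, m2) = (if m1 = m2 then complex_of_real (p m1) else 0)" if "m1 < nM" "m2 < nM" for m1 m2
  proof -
    have "?\<rho>M $$ (m1, m2) = (\<Sum>l<d. if m1 = m2 then complex_of_real (p m1) * rs m1 $$ (l,l) else 0)"
      unfolding ptrace2_idx[OF that] by (intro sum.cong refl) (simp add: \<rho>i that)
    also have "\<dots> = (if m1 = m2 then complex_of_real (p m1) * tr (rs m1) else 0)"
      using rsc that unfolding tr_def by (auto simp: sum_distrib_left)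
    finally show ?thesis using rst that by simp
  qed
  let ?T = "id_tensor nM d (blockP K a b \<delta>) \<rho>"
  let ?P = "blockP K a b \<delta>"
  have dimT: "dim_row ?T = nM*d" by (simp add: id_tensor_def)
  have sig_form: "sf (nM*d) (ent (kron ?\<rho>M \<sigma>)) w w = (\<Sum>m<nM. complex_of_real (p m) * sf d (ent \<sigma>) (\<lambda>i. w (m*d+i)) (\<lambda>i. w (m*d+i)))" for w
  proof -
    have "sf (nM*d) (ent (kron ?\<rho>M \<sigma>)) w w = (\<Sum>m1<nM. \<Sum>m2<nM. ?\<rho>M $$ (m1,m2) * sf d (ent \<sigma>) (\<lambda>i. w (m1*d+i)) (\<lambda>i. w (m2*d+i)))"
      by (rule kron_sf[OF \<rho>Mc \<sigma>c])
    also have "\<dots> = (\<Sum>m1<nM. \<Sum>m2<nM. if m1 = m2 then complex_of_real (p m1) * sf d (ent \<sigma>) (\<lambda>i. w (m1*d+i)) (\<lambda>i. w (m1*d+i)) else 0)"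
      by (intro sum.cong refl) (simp add: \<rho>Mi)
    also have "\<dots> = (\<Sum>m<nM. complex_of_real (p m) * sf d (ent \<sigma>) (\<lambda>i. w (m*d+i)) (\<lambda>i. w (m*d+i)))"
      by (rule sum_diag_collapse)
    finally show ?thesis .
  qed
  have ptrfM: "ptrf a b k (ent (mat d d (\<lambda>(x,y). \<rho> $$ (m1*d+x, m2*d+y)))) x y
      = (if m1 = m2 then complex_of_real (p m1) * ptrf a b k (ent (rs m1)) x y else 0)"
    if "m1 < nM" "m2 < nM" "k < K" "x < a k" "y < a k" for m1 m2 k x y
  proof -
    have lt: "off a b k + z * b k + l < d" if "z < a k" "l < b k" for z l
      using idx_lt(2)[where K=K and a=a and b=b, OF \<open>k < K\<close> that] d by simp
    show ?thesis unfolding ptrf_def ent_def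
      using that lt by (auto simp: \<rho>i sum_distrib_left intro!: sum.neutral)
  qed
  have PM: "sf d (ent (?P (mat d d (\<lambda>(x,y). \<rho> $$ (m1*d+x, m2*d+y))))) u u'
      = (if m1 = m2 then complex_of_real (p m1) * sf d (ent (?P (rs m1))) u u' else 0)"
    if "m1 < nM" "m2 < nM" for m1 m2 u u'
  proof -
    let ?S = "\<lambda>k x y. sf (b k) (ent (\<delta> k)) (Ub a b u k x) (Ub a b u' k y)"
    have "sf d (ent (?P (mat d d (\<lambda>(x,y). \<rho> $$ (m1*d+x, m2*d+y))))) u u'
       = (\<Sum>k<K. \<Sum>x<a k. \<Sum>y<a k. ptrf a b k (ent (mat d d (\<lambda>(x,y). \<rho> $$ (m1*d+x, m2*d+y)))) x y * ?S k x y)"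
      unfolding d by (rule P_sf[OF DF(1)])
    also have "\<dots> = (\<Sum>k<K. \<Sum>x<a k. \<Sum>y<a k. (if m1 = m2 then complex_of_real (p m1) * (ptrf a b k (ent (rs m1)) x y * ?S k x y) else 0))"
      by (intro sum.cong refl) (simp add: ptrfM[OF that])
    also have "\<dots> = (if m1 = m2 then complex_of_real (p m1) * (\<Sum>k<K. \<Sum>x<a k. \<Sum>y<a k. ptrf a b k (ent (rs m1)) x y * ?S k x y) else 0)"
      by (cases "m1 = m2") (simp_all add: sum_distrib_left)
    also have "(\<Sum>k<K. \<Sum>x<a k. \<Sum>y<a k. ptrf a b k (ent (rs m1)) x y * ?S k x y) = sf d (ent (?P (rs m1))) u u'"
      unfolding d by (rule P_sf[OF DF(1), symmetric])
    finally show ?thesis .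
  qed
  have rho_form: "sf (nM*d) (ent ?T) w w = (\<Sum>m<nM. complex_of_real (p m) * sf d (ent (?P (rs m))) (\<lambda>i. w (m*d+i)) (\<lambda>i. w (m*d+i)))" for w
  proof -
    have "sf (nM*d) (ent ?T) w w = (\<Sum>m1<nM. \<Sum>m2<nM. if m1 = m2 then complex_of_real (p m1) * sf d (ent (?P (rs m1))) (\<lambda>i. w (m1*d+i)) (\<lambda>i. w (m1*d+i)) else 0)"
      unfolding T_sf by (intro sum.cong refl) (simp add: PM)
    thus ?thesis by (simp add: sum_diag_collapse)
  qed
  have sigp: "psdf d (ent \<sigma>)" using \<sigma>S unfolding states_def by (auto intro: psd_psdf)
  have "psd (dim_row ?T) (mat (dim_row ?T) (dim_row ?T) (\<lambda>(i,j). complex_of_real S * kron ?\<rho>M \<sigma> $$ (i,j) - ?T $$ (i,j)))"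
  proof (rule psd_diff[OF dimT])
    fix w
    show "Im (sf (nM*d) (ent (kron ?\<rho>M \<sigma>)) w w) = 0"
      unfolding sig_form Im_sum using sigp unfolding psdf_def by simp
    show "Im (sf (nM*d) (ent ?T) w w) = 0"
      unfolding rho_form Im_sum using P_state_bound(1)[OF A d] H1 by simp
    let ?R = "\<lambda>m. (\<Sum>k<K. \<Sum>x<a k. Re (sf (b k) (ent (\<delta> k)) (Ub a b (\<lambda>i. w (m*d+i)) k x) (Ub a b (\<lambda>i. w (m*d+i)) k x)))"
    have "Re (sf (nM*d) (ent ?T) w w) = (\<Sum>m<nM. p m * Re (sf d (ent (?P (rs m))) (\<lambda>i. w (m*d+i)) (\<lambda>i. w (m*d+i))))"
      unfolding rho_form Re_sum by simp
    also have "\<dots> \<le> (\<Sum>m<nM. p m * ?R m)"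
      by (rule sum_mono) (use H1 P_state_bound(2)[OF A d] in \<open>auto intro: mult_left_mono\<close>)
    also have "\<dots> = S * Re (sf (nM*d) (ent (kron ?\<rho>M \<sigma>)) w w)"
    proof -
      have sigf: "sf d (ent \<sigma>) u u = (\<Sum>k<K. complex_of_real (cc k) * (\<Sum>x<a k. sf (b k) (ent (\<delta> k)) (Ub a b u k x) (Ub a b u k x)))" for u
        unfolding \<sigma>_def d by (rule sigc_sf[OF DF(1) DF(4)])
      show ?thesis unfolding sig_form sigf
        using S0 by (simp add: cc_def Re_sum sum_distrib_left sum_divide_distrib mult_ac)
    qed
    finally show "Re (sf (nM*d) (ent ?T) w w) \<le> S * Re (sf (nM*d) (ent (kron ?\<rho>M \<sigma>)) w w)" .
  qed
  hence "Dmax ?T (kron ?\<rho>M \<sigma>) \<le> ereal (log 2 S)" by (rule Dmax_le[OF S0])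
  thus ?thesis unfolding S_def by (rule INF_lower2[OF \<sigma>S])
qed




theorem mainTheorem10:
  fixes K :: nat and a b :: "nat \<Rightarrow> nat" and \<delta> :: "nat \<Rightarrow> complex mat"
  assumes "\<forall>k<K. \<delta> k \<in> states (b k) \<and> pd (b k) (\<delta> k)"
  defines "d \<equiv> off a b K" and "P \<equiv> blockP K a b \<delta>"
  shows "(SUP \<psi>\<in>pure_states (d * d). INF \<sigma>\<in>states d.
            Dmax (id_tensor d d P \<psi>) (kron (1\<^sub>m d) \<sigma>))
           \<le> ereal (log 2 (real (Max (a ` {..<K}))))
       \<and> (SUP (nM, \<rho>)\<in>cq_states d. INF \<sigma>\<in>states d.
            Dmax (id_tensor nM d P \<rho>) (kron (ptrace2 nM d \<rho>) \<sigma>))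
           \<le> ereal (log 2 (\<Sum>k<K. real (a k)))
       \<and> (SUP \<psi>\<in>pure_states (d * d). INF \<sigma>\<in>states d.
            Dmax (id_tensor d d P \<psi>) (kron (ptrace2 d d \<psi>) \<sigma>))
           \<le> ereal (log 2 (\<Sum>k<K. (real (a k))\<^sup>2))
       \<and> (SUP \<psi>\<in>pure_states (d * d). INF \<sigma>\<in>sep_states d d.
            Dmax (id_tensor d d P \<psi>) \<sigma>)
           \<le> ereal (log 2 (real (Max (a ` {..<K}))))"
proof -
  have d: "d = off a b K" unfolding d_def ..
  have P: "P = blockP K a b \<delta>" unfolding P_def ..
  have c1: "(SUP \<psi>\<in>pure_states (d * d). INF \<sigma>\<in>states d.
            Dmax (id_tensor d d P \<psi>) (kron (1\<^sub>m d) \<sigma>))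
           \<le> ereal (log 2 (real (Max (a ` {..<K}))))"
    unfolding P by (rule SUP_least) (rule claim1_pt[OF assms(1) d])
  have c2: "(SUP (nM, \<rho>)\<in>cq_states d. INF \<sigma>\<in>states d.
            Dmax (id_tensor nM d P \<rho>) (kron (ptrace2 nM d \<rho>) \<sigma>))
           \<le> ereal (log 2 (\<Sum>k<K. real (a k)))"
    unfolding P
  proof (rule SUP_least)
    fix x assume x: "x \<in> cq_states d"
    obtain nM \<rho> where xe: "x = (nM, \<rho>)" by (cases x)
    show "(case x of (nM, \<rho>) \<Rightarrow> INF \<sigma>\<in>states d. Dmax (id_tensor nM d (blockP K a b \<delta>) \<rho>) (kron (ptrace2 nM d \<rho>) \<sigma>))
        \<le> ereal (log 2 (\<Sum>k<K. real (a k)))"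
      unfolding xe using claim2_pt[OF assms(1) d] x xe by simp
  qed
  have c3: "(SUP \<psi>\<in>pure_states (d * d). INF \<sigma>\<in>states d.
            Dmax (id_tensor d d P \<psi>) (kron (ptrace2 d d \<psi>) \<sigma>))
           \<le> ereal (log 2 (\<Sum>k<K. (real (a k))\<^sup>2))"
    unfolding P by (rule SUP_least) (rule claim3_pt[OF assms(1) d])
  have c4: "(SUP \<psi>\<in>pure_states (d * d). INF \<sigma>\<in>sep_states d d.
            Dmax (id_tensor d d P \<psi>) \<sigma>)
           \<le> ereal (log 2 (real (Max (a ` {..<K}))))"
    unfolding P by (rule SUP_least) (rule claim4_pt[OF assms(1) d])
  show ?thesis using c1 c2 c3 c4 by blast
qed


end
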